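(* Let $\mathbb E^{\mathcal A},\mathbb E^{\mathcal B},\mathbb E^{\mathcal C}$ be decomposed symmetric $n$-fold vector bundles over $M,N,P$ and $\eta=(\eta_p)_p\colon\mathbb E^{\mathcal A}\to\mathbb E^{\mathcal B}$, $\tau=(\tau_p)_p\colon\mathbb E^{\mathcal B}\to\mathbb E^{\mathcal C}$ morphisms of symmetric $n$-fold vector bundles over $\eta_0\colon M\to N$, $\tau_0\colon N\to P$. Then $\tau\circ\eta$, a morphism over $\tau_0\circ\eta_0$, has components given, for every nondecreasing tuple $p=(i_1,\ldots,i_k)$ with $\sum p\le n$, $\rho^p_{\rm can}=(K_1,\ldots,K_k)$ and $a_{K_j}\in A_{i_j}$ over a common point, by $$(\tau\circ\eta)_p(a_{K_1},\ldots,a_{K_k})=\sum_{(\rho_1,\ldots,\rho_l)}\mathrm{sgn}(\rho_1,\ldots,\rho_l)\,\tau_{(\#\cup\rho_1,\ldots,\#\cup\rho_l)}\Big(\eta_{|\rho_1|}\big((a_K)_{K\in\rho_1}\big),\ldots,\eta_{|\rho_l|}\big((a_K)_{K\in\rho_l}\big)\Big),$$ the sum running over all $l\ge1$ and tuples of canonically ordered partitions $\rho_1,\ldots,\rho_l$ with $\rho_1\cup\cdots\cup\rho_l=\{K_1,\ldots,K_k\}$ as sets and $\cup\rho_1<\cdots<\cup\rho_l$ in the canonical order of subsets (by cardinality, then lexicographically); $(\rho_1,\ldots,\rho_l)$ denotes the concatenated ordered partition of $\{1,\ldots,\sum p\}$ and $(a_K)_{K\in\rho_j}$ is listed in the order of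 $\rho_j$.
   Context: For vector bundles $A_1,\ldots,A_n\to M$, $\mathbb E^{\mathcal A}(I)=\prod^M_{\emptyset\ne J\subseteq I}A_{\#J}$ with canonical projections and $S_n$-action $(a_J)_{J\subseteq I}\mapsto(\epsilon(\sigma^{-1},J)a_{\sigma^{-1}(J)})_{J\subseteq\sigma(I)}$, $\epsilon(\sigma,I)=(-1)^{\#\{(a,b)\in I^2:a<b,\sigma(a)>\sigma(b)\}}$. A morphism $\tau\colon\mathbb E^{\mathcal A}\to\mathbb E^{\mathcal B}$ of symmetric $n$-fold vector bundles (equivariant morphism of $n$-fold vector bundles) is the same as a family $(\tau_p)_{p}$, $p=(i_1,\ldots,i_k)$ nondecreasing with $\sum p\le n$, of vector bundle morphisms $\tau_p\colon A_{i_1}\otimes\cdots\otimes A_{i_k}\to B_{\sum p}$ over a common base map, symmetric in arguments from $A_j$, $j$ even, skew-symmetric for $j$ odd, via $\tau(J)((a_I)_{I\subseteq J})=(\sum_{\rho=(I_1,\ldots,I_k)\in\mathcal P(I)}\mathrm{sgn}(\rho)\tau_{(\#I_1,\ldots,\#I_k)}(a_{I_1},\ldots,a_{I_k}))_{I\subseteq J}$. Notation: $\mathcal P(I)$ canonically ordered partitions (increasing cardinality, ties lexicographic); $|\rho|=(\#I_1,\ldots,\#I_k)$; $\rho^p_{\rm can}$ the partition of $\{1,\ldots,\sum p\}$ into consecutive blocks of sizes $i_1,\ldots,i_k$; $\mathrm{sgn}$ of an ordered partition of a set = sign of the permutation from natural order to the order listing the blocks successively, each increasingly. *)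

theory Defs
  imports Complex_Main
begin

text \<open>A vector bundle family A_1,...,A_n over a base (type 'm) is modelled by its fibres
  A i m, a linear subspace of an ambient real vector space 'a.\<close>

definition vb_family :: "nat \<Rightarrow> (nat \<Rightarrow> 'm \<Rightarrow> 'a::real_vector set) \<Rightarrow> bool" where
  "vb_family n A \<longleftrightarrow> (\<forall>i m. 1 \<le> i \<and> i \<le> n \<longrightarrow> subspace (A i m))"

definition set_less :: "nat set \<Rightarrow> nat set \<Rightarrow> bool" where
  "set_less I J \<longleftrightarrow> card I < card J \<or>
     (card I = card J \<and> (sorted_list_of_set I, sorted_list_of_set J) \<in> lexord {(x, y). x < y})"

definition canon_partitions :: "nat set \<Rightarrow> nat set list set" where
  "canon_partitions I = {\<rho>. (\<forall>K\<in>set \<rho>. K \<noteq> {}) \<and>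
      (\<forall>i<length \<rho>. \<forall>j<length \<rho>. i \<noteq> j \<longrightarrow> \<rho> ! i \<inter> \<rho> ! j = {}) \<and>
      \<Union>(set \<rho>) = I \<and> sorted_wrt set_less \<rho>}"

definition inversions :: "nat list \<Rightarrow> nat" where
  "inversions xs = card {(i, j). i < j \<and> j < length xs \<and> xs ! i > xs ! j}"

definition psgn :: "nat set list \<Rightarrow> real" where
  "psgn \<rho> = (-1) ^ inversions (concat (map sorted_list_of_set \<rho>))"

definition valid_tuple :: "nat \<Rightarrow> nat list \<Rightarrow> bool" where
  "valid_tuple n p \<longleftrightarrow> p \<noteq> [] \<and> sorted p \<and> (\<forall>i\<in>set p. 1 \<le> i) \<and> sum_list p \<le> n"

definition rho_can :: "nat list \<Rightarrow> nat set list" where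
  "rho_can p = map (\<lambda>j. {sum_list (take j p) + 1 .. sum_list (take (Suc j) p)}) [0..<length p]"

definition swap_adj :: "nat \<Rightarrow> 'x list \<Rightarrow> 'x list" where
  "swap_adj j xs = xs[j := xs ! Suc j, Suc j := xs ! j]"

text \<open>Arguments are
  passed as lists; this is a morphism of symmetric n-fold vector bundles E^A \<rightarrow> E^B.\<close>
definition sym_morphism ::
  "nat \<Rightarrow> (nat \<Rightarrow> 'm \<Rightarrow> 'a::real_vector set) \<Rightarrow> (nat \<Rightarrow> 'n \<Rightarrow> 'b::real_vector set) \<Rightarrow>
   ('m \<Rightarrow> 'n) \<Rightarrow> (nat list \<Rightarrow> 'a list \<Rightarrow> 'b) \<Rightarrow> bool" where
  "sym_morphism n A B tau0 tau \<longleftrightarrow>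
    (\<forall>p args m. valid_tuple n p \<and> length args = length p \<and> (\<forall>j<length p. args ! j \<in> A (p ! j) m) \<longrightarrow>
       tau p args \<in> B (sum_list p) (tau0 m) \<and>
       (\<forall>j<length p. \<forall>x\<in>A (p ! j) m. \<forall>y\<in>A (p ! j) m. \<forall>c::real.
          tau p (args[j := x + c *\<^sub>R y]) = tau p (args[j := x]) + c *\<^sub>R tau p (args[j := y])) \<and>
       (\<forall>j. Suc j < length p \<and> p ! j = p ! Suc j \<longrightarrow>
          tau p (swap_adj j args) = (if even (p ! j) then 1 else -1) *\<^sub>R tau p args))"

text \<open>Elements of the fibre of E^A(J) over m: families (a_I) for nonempty I \<subseteq> J with
  a_I in A_{#I} over m (extended by 0 outside).\<close>
definition in_E :: "(nat \<Rightarrow> 'm \<Rightarrow> 'a::real_vector set) \<Rightarrow> nat set \<Rightarrow> 'm \<Rightarrow> (nat set \<Rightarrow> 'a) \<Rightarrow> bool" where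
  "in_E A J m a \<longleftrightarrow> (\<forall>I. (I \<noteq> {} \<and> I \<subseteq> J \<longrightarrow> a I \<in> A (card I) m) \<and>
                          (\<not> (I \<noteq> {} \<and> I \<subseteq> J) \<longrightarrow> a I = 0))"

definition induced :: "(nat list \<Rightarrow> 'a list \<Rightarrow> 'b::real_vector) \<Rightarrow> nat set \<Rightarrow> (nat set \<Rightarrow> 'a) \<Rightarrow> nat set \<Rightarrow> 'b" where
  "induced tau J a I = (if I \<noteq> {} \<and> I \<subseteq> J
     then (\<Sum>\<rho>\<in>canon_partitions I. psgn \<rho> *\<^sub>R tau (map card \<rho>) (map a \<rho>)) else 0)"

definition comp_index :: "nat set list \<Rightarrow> nat set list list set" where
  "comp_index Ks = {\<rho>s. \<rho>s \<noteq> [] \<and>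
      (\<forall>\<rho>\<in>set \<rho>s. \<rho> \<noteq> [] \<and> \<rho> \<in> canon_partitions (\<Union>(set \<rho>))) \<and>
      distinct (concat \<rho>s) \<and> set (concat \<rho>s) = set Ks \<and>
      sorted_wrt set_less (map (\<lambda>\<rho>. \<Union>(set \<rho>)) \<rho>s)}"

text \<open>The components given by the formula of the theorem; args ! j = a_{K_j}.\<close>
definition comp_components ::
  "(nat list \<Rightarrow> 'b list \<Rightarrow> 'c::real_vector) \<Rightarrow> (nat list \<Rightarrow> 'a list \<Rightarrow> 'b) \<Rightarrow> nat list \<Rightarrow> 'a list \<Rightarrow> 'c" where
  "comp_components tau eta p args =
     (let Ks = rho_can p; a = (\<lambda>K. the (map_of (zip Ks args) K)) in
      (\<Sum>\<rho>s\<in>comp_index Ks. psgn (concat \<rho>s) *\<^sub>R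
          tau (map (\<lambda>\<rho>. card (\<Union>(set \<rho>))) \<rho>s)
              (map (\<lambda>\<rho>. eta (map card \<rho>) (map a \<rho>)) \<rho>s)))"

end

theory Submission
  imports Defs "HOL-Library.Multiset" "HOL-Library.List_Lexorder" "HOL-Library.Product_Lexorder"
begin


fun inv' :: "nat list \<Rightarrow> nat" where
  "inv' [] = 0"
| "inv' (x # xs) = length (filter (\<lambda>y. y < x) xs) + inv' xs"

definition cr :: "nat list \<Rightarrow> nat list \<Rightarrow> nat" where
  "cr xs ys = sum_list (map (\<lambda>x. length (filter (\<lambda>y. y < x) ys)) xs)"

lemma inversions_Cons: "inversions (x # xs) = length (filter (\<lambda>y. y < x) xs) + inversions xs"
proof -
  let ?S = "{(i, j). i < j \<and> j < length (x#xs) \<and> (x#xs) ! i > (x#xs) ! j}"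
  let ?S' = "{(i, j). i < j \<and> j < length xs \<and> xs ! i > xs ! j}"
  let ?A = "{j. j < length xs \<and> xs ! j < x}"
  have eq: "?S = (\<lambda>j. (0, Suc j)) ` ?A \<union> (\<lambda>(i,j). (Suc i, Suc j)) ` ?S'"
  proof (rule set_eqI, clarify)
    fix i j
    show "((i, j) \<in> ?S) = ((i, j) \<in> (\<lambda>j. (0, Suc j)) ` ?A \<union> (\<lambda>(i,j). (Suc i, Suc j)) ` ?S')"
      by (cases i; cases j) (auto simp: image_iff)
  qed
  have fA: "finite ?A" by simp
  have fS': "finite ?S'" by (rule finite_subset[of _ "{..<length xs} \<times> {..<length xs}"]) auto
  have "card ?S = card ((\<lambda>j. (0::nat, Suc j)) ` ?A) + card ((\<lambda>(i,j). (Suc i, Suc j)) ` ?S')"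
    unfolding eq by (rule card_Un_disjoint) (use fA fS' in auto)
  also have "card ((\<lambda>j. (0::nat, Suc j)) ` ?A) = card ?A"
    by (rule card_image) (auto simp: inj_on_def)
  also have "card ((\<lambda>(i,j). (Suc i, Suc j)) ` ?S') = card ?S'"
    by (rule card_image) (auto simp: inj_on_def)
  also have "card ?A = length (filter (\<lambda>y. y < x) xs)"
    by (simp add: length_filter_conv_card)
  finally show ?thesis by (simp add: inversions_def)
qed

lemma inversions_inv': "inversions xs = inv' xs"
  by (induction xs) (auto simp: inversions_Cons, simp add: inversions_def)

lemma cr_Nil1[simp]: "cr [] ys = 0" by (simp add: cr_def)
lemma cr_Cons1: "cr (x#xs) ys = length (filter (\<lambda>y. y < x) ys) + cr xs ys" by (simp add: cr_def)
lemma cr_Nil2[simp]: "cr xs [] = 0" by (induction xs) (simp_all add: cr_def)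
lemma cr_append1: "cr (xs @ ys) zs = cr xs zs + cr ys zs" by (simp add: cr_def)
lemma cr_append2: "cr xs (ys @ zs) = cr xs ys + cr xs zs"
  by (induction xs) (simp_all add: cr_def)

lemma inv'_append: "inv' (xs @ ys) = inv' xs + inv' ys + cr xs ys"
  by (induction xs) (auto simp: cr_Cons1)

lemma cr_swap: "distinct (xs @ ys) \<Longrightarrow> cr xs ys + cr ys xs = length xs * length ys"
proof (induction xs)
  case Nil then show ?case by simp
next
  case (Cons x xs)
  have "cr ys [x] = length (filter (\<lambda>y. x < y) ys)"
    by (induction ys) (auto simp: cr_def)
  moreover have "length (filter (\<lambda>y. y < x) ys) + length (filter (\<lambda>y. x < y) ys) = length ys"
  proof -
    have "x \<notin> set ys" using Cons.prems by auto
    hence "filter (\<lambda>y. x < y) ys = filter (\<lambda>y. \<not> y < x) ys"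
      by (intro filter_cong) (auto, metis linorder_neqE_nat)
    thus ?thesis using sum_length_filter_compl[of "\<lambda>y. y < x" ys] by simp
  qed
  moreover have "cr ys (x # xs) = cr ys [x] + cr ys xs"
    using cr_append2[of ys "[x]" xs] by simp
  ultimately show ?case using Cons by (simp add: cr_Cons1)
qed

lemma inv'_swap:
  assumes "distinct (g @ h)"
  shows "(-1::real) ^ inv' (u @ h @ g @ v) = (-1) ^ (length g * length h) * (-1) ^ inv' (u @ g @ h @ v)"
proof -
  have c: "cr g h + cr h g = length g * length h" using cr_swap[OF assms] .
  have e1: "inv' (u @ g @ h @ v) = inv' u + inv' g + inv' h + inv' v + cr h v + cr g h + cr g v
     + cr u g + cr u h + cr u v"
    by (simp add: inv'_append cr_append1 cr_append2)
  have e2: "inv' (u @ h @ g @ v) = inv' u + inv' g + inv' h + inv' v + cr h v + cr h g + cr g v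
     + cr u g + cr u h + cr u v"
    by (simp add: inv'_append cr_append1 cr_append2)
  have "inv' (u @ h @ g @ v) + 2 * cr g h = inv' (u @ g @ h @ v) + length g * length h"
    using e1 e2 c by simp
  hence "(-1::real) ^ (inv' (u @ h @ g @ v) + 2 * cr g h) = (-1) ^ (inv' (u @ g @ h @ v) + length g * length h)"
    by simp
  thus ?thesis by (simp add: power_add power_mult mult.commute)
qed

lemma inv'_sorted: "sorted xs \<Longrightarrow> inv' xs = 0"
  by (induction xs) (auto simp: filter_empty_conv)

lemma cr_set: "distinct xs \<Longrightarrow> distinct ys \<Longrightarrow> cr xs ys = (\<Sum>x\<in>set xs. card {y\<in>set ys. y < x})"
  by (simp add: cr_def sum_list_distinct_conv_sum_set distinct_length_filter)
     (intro sum.cong refl arg_cong[where f=card], auto)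


lemma swap_adj_app: "swap_adj (length us) (us @ a # b # vs) = us @ b # a # vs"
  by (simp add: swap_adj_def list_update_append nth_append)

lemma split_adj:
  assumes "Suc j < length xs"
  obtains us a b vs where "xs = us @ a # b # vs" "length us = j"
proof -
  have "xs = take j xs @ xs ! j # xs ! Suc j # drop (Suc (Suc j)) xs"
    using assms by (metis Cons_nth_drop_Suc Suc_lessD append_take_drop_id)
  thus ?thesis using that[of "take j xs"] assms by simp
qed

lemma move_front:
  fixes key :: "'x \<Rightarrow> 'k::linorder"
  assumes "\<And>zs j. mset zs = mset (us @ x # vs) \<Longrightarrow> sorted (map key zs) \<Longrightarrow> Suc j < length zs \<Longrightarrow>
             key (zs ! j) = key (zs ! Suc j) \<Longrightarrow> f (swap_adj j zs) = f zs"
    and "\<forall>u\<in>set us. key u = key x" and "sorted (map key (us @ x # vs))"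
  shows "f (us @ x # vs) = f (x # us @ vs)"
  using assms
proof (induction us arbitrary: f)
  case Nil then show ?case by simp
next
  case (Cons u us)
  have ku: "key u = key x" using Cons.prems(2) by simp
  have minx: "\<forall>z\<in>set (us @ x # vs). key x \<le> key z"
    using Cons.prems(2,3) by (auto simp: sorted_append)
  have "(\<lambda>l. f (u # l)) (us @ x # vs) = (\<lambda>l. f (u # l)) (x # us @ vs)"
  proof (rule Cons.IH)
    fix zs j assume a: "mset zs = mset (us @ x # vs)" "sorted (map key zs)" "Suc j < length zs"
      "key (zs ! j) = key (zs ! Suc j)"
    have sz: "set zs = set (us @ x # vs)" using a(1) by (metis mset_eq_setD)
    have "f (swap_adj (Suc j) (u # zs)) = f (u # zs)"
      by (rule Cons.prems(1)) (use a sz minx ku in auto)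
    thus "f (u # swap_adj j zs) = f (u # zs)" by (simp add: swap_adj_def)
  next
    show "\<forall>u\<in>set us. key u = key x" using Cons.prems(2) by simp
    show "sorted (map key (us @ x # vs))" using Cons.prems(3) by simp
  qed
  hence "f (u # us @ x # vs) = f (u # x # us @ vs)" by simp
  also have "\<dots> = f (swap_adj 0 (u # x # us @ vs))"
  proof (rule sym, rule Cons.prems(1))
    show "mset (u # x # us @ vs) = mset ((u # us) @ x # vs)" by simp
    show "sorted (map key (u # x # us @ vs))"
      using Cons.prems(2,3) ku by (auto simp: sorted_append)
  qed (use ku in auto)
  also have "\<dots> = f (x # (u # us) @ vs)" by (simp add: swap_adj_def)
  finally show ?case by simp
qed

lemma bubble:
  fixes key :: "'x \<Rightarrow> 'k::linorder"
  assumes "\<And>zs j. mset zs = mset xs \<Longrightarrow> sorted (map key zs) \<Longrightarrow> Suc j < length zs \<Longrightarrow>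
             key (zs ! j) = key (zs ! Suc j) \<Longrightarrow> f (swap_adj j zs) = f zs"
    and "mset ys = mset xs" and "sorted (map key xs)" and "sorted (map key ys)"
  shows "f ys = f xs"
  using assms
proof (induction xs arbitrary: ys f)
  case Nil then show ?case by auto
next
  case (Cons x xs)
  have "x \<in> set ys" using Cons.prems(2) by (metis list.set_intros(1) mset_eq_setD)
  then obtain us vs where ys: "ys = us @ x # vs" "x \<notin> set us" by (meson split_list_first)
  have minx: "\<forall>z\<in>set xs. key x \<le> key z" using Cons.prems(3) by simp
  have sy: "set ys = set (x # xs)" using Cons.prems(2) by (metis mset_eq_setD)
  have kus: "\<forall>u\<in>set us. key u = key x"
  proof
    fix u assume u: "u \<in> set us"
    have "key u \<le> key x" using Cons.prems(4) u ys by (auto simp: sorted_append)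
    moreover have "u \<in> set (x # xs)" using sy ys u by auto
    hence "key x \<le> key u" using minx by auto
    ultimately show "key u = key x" by simp
  qed
  have h1: "f ys = f (x # us @ vs)"
    unfolding ys(1)
    by (rule move_front) (use Cons.prems ys kus in auto)
  have h2: "(\<lambda>l. f (x # l)) (us @ vs) = (\<lambda>l. f (x # l)) xs"
  proof (rule Cons.IH)
    fix zs j assume a: "mset zs = mset xs" "sorted (map key zs)" "Suc j < length zs"
      "key (zs ! j) = key (zs ! Suc j)"
    have sz: "set zs = set xs" using a(1) by (metis mset_eq_setD)
    have "f (swap_adj (Suc j) (x # zs)) = f (x # zs)"
      by (rule Cons.prems(1)) (use a sz minx in auto)
    thus "f (x # swap_adj j zs) = f (x # zs)" by (simp add: swap_adj_def)
  next
    show "mset (us @ vs) = mset xs" using Cons.prems(2) ys by simp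
    show "sorted (map key xs)" using Cons.prems(3) by simp
    show "sorted (map key (us @ vs))" using Cons.prems(4) ys by (auto simp: sorted_append)
  qed
  show ?case using h1 h2 by simp
qed


definition w :: "nat set list \<Rightarrow> nat list" where
  "w L = concat (map sorted_list_of_set L)"

lemma w_simps[simp]: "w [] = []" "w (X # L) = sorted_list_of_set X @ w L" "w (L @ L') = w L @ w L'"
  by (simp_all add: w_def)

lemma w_concat: "w (concat Ls) = concat (map w Ls)"
  by (induction Ls) auto

lemma psgn_w: "psgn L = (-1) ^ inv' (w L)"
  by (simp add: psgn_def w_def inversions_inv')

lemma set_w: "(\<forall>X\<in>set L. finite X) \<Longrightarrow> set (w L) = \<Union>(set L)"
  by (induction L) auto

lemma length_w_card: "(\<forall>X\<in>set L. finite X) \<Longrightarrow> distinct (w L) \<Longrightarrow> length (w L) = card (\<Union>(set L))"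
  by (metis distinct_card set_w)

lemma psgn_sq: "psgn L * psgn L = 1"
  by (simp add: psgn_def power_mult_distrib[symmetric])

lemma psgn_swap_seg:
  assumes "distinct (w G @ w H)" "\<forall>X\<in>set G. finite X" "\<forall>X\<in>set H. finite X"
  shows "psgn (A @ H @ G @ B) = (-1) ^ (card (\<Union>(set G)) * card (\<Union>(set H))) * psgn (A @ G @ H @ B)"
proof -
  have "length (w G) = card (\<Union>(set G))" "length (w H) = card (\<Union>(set H))"
    using assms by (auto intro!: length_w_card)
  thus ?thesis using inv'_swap[OF assms(1), of "w A" "w B"] by (simp add: psgn_w)
qed

lemma psgn_swap_adj:
  assumes "Suc j < length L" "\<forall>X\<in>set L. finite X" "distinct (w L)"
  shows "psgn (swap_adj j L) = (-1) ^ (card (L ! j) * card (L ! Suc j)) * psgn L"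
proof -
  obtain us a b vs where L: "L = us @ a # b # vs" "length us = j" using split_adj[OF assms(1)] .
  have "swap_adj j L = us @ [b] @ [a] @ vs" using L swap_adj_app by auto
  moreover have "L = us @ [a] @ [b] @ vs" using L by simp
  moreover have "distinct (w [a] @ w [b])" using assms(3) L by auto
  moreover have "L!j = a" "L!Suc j = b" using L by (auto simp: nth_append)
  ultimately show ?thesis using psgn_swap_seg[of "[a]" "[b]" us vs] assms(2) L by simp
qed

lemma psgn_concat:
  assumes "\<forall>\<sigma>\<in>set \<sigma>s. \<forall>X\<in>set \<sigma>. finite X"
    and "distinct (w (concat \<sigma>s))" and "distinct (w (map (\<lambda>\<sigma>. \<Union>(set \<sigma>)) \<sigma>s))"
  shows "psgn (concat \<sigma>s) = psgn (map (\<lambda>\<sigma>. \<Union>(set \<sigma>)) \<sigma>s) * prod_list (map psgn \<sigma>s)"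
  using assms
proof (induction \<sigma>s)
  case Nil then show ?case by (simp add: psgn_def inversions_def)
next
  case (Cons \<sigma> \<sigma>s)
  let ?U = "\<lambda>\<sigma>. \<Union>(set \<sigma>)"
  have fin: "finite (?U \<sigma>)" using Cons.prems(1) by auto
  have d1: "distinct (w \<sigma>)" "distinct (w (concat \<sigma>s))"
    using Cons.prems(2) by (auto simp: w_concat)
  have d2: "distinct (w (map ?U \<sigma>s))" using Cons.prems(3) by simp
  have s1: "set (w \<sigma>) = ?U \<sigma>" using Cons.prems(1) by (simp add: set_w)
  have s2: "set (w (concat \<sigma>s)) = \<Union>(?U ` set \<sigma>s)" using Cons.prems(1) by (subst set_w) auto
  have s3: "set (w (map ?U \<sigma>s)) = \<Union>(?U ` set \<sigma>s)"
    using Cons.prems(1) by (subst set_w) auto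
  have crq: "cr (w \<sigma>) (w (concat \<sigma>s)) = cr (sorted_list_of_set (?U \<sigma>)) (w (map ?U \<sigma>s))"
    using d1 d2 fin s1 s2 s3 by (simp add: cr_set)
  have IH: "psgn (concat \<sigma>s) = psgn (map ?U \<sigma>s) * prod_list (map psgn \<sigma>s)"
    using Cons by simp
  have e1: "inv' (w (concat (\<sigma> # \<sigma>s))) = inv' (w \<sigma>) + inv' (w (concat \<sigma>s)) + cr (w \<sigma>) (w (concat \<sigma>s))"
    by (simp add: inv'_append w_concat)
  have e2: "inv' (w (map ?U (\<sigma> # \<sigma>s))) = inv' (w (map ?U \<sigma>s)) + cr (sorted_list_of_set (?U \<sigma>)) (w (map ?U \<sigma>s))"
    by (simp add: inv'_append inv'_sorted)
  have pf: "psgn = (\<lambda>L. (-1) ^ inv' (w L))" by (rule ext) (rule psgn_w)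
  show ?case using IH e1 e2 crq by (simp add: pf power_add)
qed


definition fib :: "(nat \<Rightarrow> 'm \<Rightarrow> 'a::real_vector set) \<Rightarrow> nat list \<Rightarrow> 'a list \<Rightarrow> 'm \<Rightarrow> bool" where
  "fib A p args m \<longleftrightarrow> length args = length p \<and> (\<forall>j<length p. args ! j \<in> A (p ! j) m)"

lemma valid_tuple_entry: "valid_tuple n p \<Longrightarrow> j < length p \<Longrightarrow> 1 \<le> p ! j \<and> p ! j \<le> n"
  unfolding valid_tuple_def
  by (metis elem_le_sum_list nth_mem order_trans)

lemma fib_update: "fib A p args m \<Longrightarrow> j < length p \<Longrightarrow> v \<in> A (p ! j) m \<Longrightarrow> fib A p (args[j := v]) m"
  by (auto simp: fib_def nth_list_update)

context
  fixes n :: nat and A :: "nat \<Rightarrow> 'm \<Rightarrow> 'a::real_vector set" and B :: "nat \<Rightarrow> 'n \<Rightarrow> 'b::real_vector set"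
    and t0 :: "'m \<Rightarrow> 'n" and t :: "nat list \<Rightarrow> 'a list \<Rightarrow> 'b"
  assumes SM: "sym_morphism n A B t0 t" and VA: "vb_family n A"
begin

lemma sub: "valid_tuple n p \<Longrightarrow> j < length p \<Longrightarrow> subspace (A (p ! j) m)"
  using VA valid_tuple_entry unfolding vb_family_def by blast

lemma t_fibre: "valid_tuple n p \<Longrightarrow> fib A p args m \<Longrightarrow> t p args \<in> B (sum_list p) (t0 m)"
  using SM unfolding sym_morphism_def fib_def by blast

lemma t_lin: "valid_tuple n p \<Longrightarrow> fib A p args m \<Longrightarrow> j < length p \<Longrightarrow> x \<in> A (p ! j) m \<Longrightarrow> y \<in> A (p ! j) m
   \<Longrightarrow> t p (args[j := x + c *\<^sub>R y]) = t p (args[j := x]) + c *\<^sub>R t p (args[j := y])"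
  using SM unfolding sym_morphism_def fib_def by blast

lemma t_skew: "valid_tuple n p \<Longrightarrow> fib A p args m \<Longrightarrow> Suc j < length p \<Longrightarrow> p ! j = p ! Suc j
   \<Longrightarrow> t p (swap_adj j args) = (if even (p ! j) then 1 else -1) *\<^sub>R t p args"
  using SM unfolding sym_morphism_def fib_def by blast

lemma t_zero: assumes "valid_tuple n p" "fib A p args m" "j < length p"
  shows "t p (args[j := 0]) = 0"
proof -
  have z: "0 \<in> A (p ! j) m" using sub[OF assms(1,3)] real_vector.subspace_0 by blast
  have "t p (args[j := 0 + 1 *\<^sub>R 0]) = t p (args[j := 0]) + 1 *\<^sub>R t p (args[j := 0])"
    by (rule t_lin[OF assms z z])
  thus ?thesis by simp
qed

lemma t_scale: assumes "valid_tuple n p" "fib A p args m" "j < length p" "y \<in> A (p ! j) m"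
  shows "t p (args[j := c *\<^sub>R y]) = c *\<^sub>R t p (args[j := y])"
proof -
  have z: "0 \<in> A (p ! j) m" using sub[OF assms(1,3)] real_vector.subspace_0 by blast
  have "t p (args[j := 0 + c *\<^sub>R y]) = t p (args[j := 0]) + c *\<^sub>R t p (args[j := y])"
    by (rule t_lin[OF assms(1-3) z assms(4)])
  thus ?thesis using t_zero[OF assms(1-3)] by simp
qed

lemma t_sum: assumes "valid_tuple n p" "fib A p args m" "j < length p" "finite S"
    "\<forall>x\<in>S. g x \<in> A (p ! j) m"
  shows "t p (args[j := (\<Sum>x\<in>S. g x)]) = (\<Sum>x\<in>S. t p (args[j := g x]))"
  using assms(4,5)
proof (induction S rule: finite_induct)
  case empty then show ?case using t_zero[OF assms(1-3)] by simp
next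
  case (insert x S)
  have s: "(\<Sum>x\<in>S. g x) \<in> A (p ! j) m"
    by (rule real_vector.subspace_sum[OF sub[OF assms(1,3)]]) (use insert.prems in auto)
  have "t p (args[j := (\<Sum>x\<in>insert x S. g x)]) = t p (args[j := g x + 1 *\<^sub>R (\<Sum>x\<in>S. g x)])"
    using insert.hyps by simp
  also have "\<dots> = t p (args[j := g x]) + 1 *\<^sub>R t p (args[j := (\<Sum>x\<in>S. g x)])"
    by (rule t_lin[OF assms(1-3)]) (use insert.prems s in auto)
  also have "\<dots> = t p (args[j := g x]) + (\<Sum>x\<in>S. t p (args[j := g x]))"
  proof -
    have "t p (args[j := (\<Sum>x\<in>S. g x)]) = (\<Sum>x\<in>S. t p (args[j := g x]))"
      by (rule insert.IH) (use insert.prems in auto)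
    thus ?thesis by simp
  qed
  also have "\<dots> = (\<Sum>x\<in>insert x S. t p (args[j := g x]))"
    using insert.hyps by (simp add: sum.insert)
  finally show ?case .
qed

lemma t_expand:
  assumes "valid_tuple n p" "length pre + length Ss = length p"
    "\<forall>j<length pre. pre ! j \<in> A (p ! j) m"
    "\<forall>i<length Ss. finite (Ss ! i) \<and> (\<forall>x\<in>Ss ! i. g x \<in> A (p ! (length pre + i)) m)"
  shows "t p (pre @ map (\<lambda>S. \<Sum>x\<in>S. g x) Ss) = (\<Sum>xs\<in>listset Ss. t p (pre @ map g xs))"
  using assms(2-4)
proof (induction Ss arbitrary: pre)
  case Nil then show ?case by simp
next
  case (Cons S Ss)
  let ?sg = "\<lambda>S. \<Sum>x\<in>S. g x"
  let ?args = "pre @ ?sg S # map ?sg Ss"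
  have j: "length pre < length p" using Cons.prems(1) by simp
  have fS: "finite S" "\<forall>x\<in>S. g x \<in> A (p ! length pre) m" using Cons.prems(3) by force+
  have sg: "(\<Sum>x\<in>S. g x) \<in> A (p ! length pre) m"
    by (rule real_vector.subspace_sum[OF sub[OF assms(1) j]]) (use fS in auto)
  have fib: "fib A p ?args m"
    unfolding fib_def
  proof (intro conjI allI impI)
    show "length ?args = length p" using Cons.prems(1) by simp
    fix j assume j: "j < length p"
    show "?args ! j \<in> A (p ! j) m"
    proof (cases "j < length pre")
      case True then show ?thesis using Cons.prems(2) by (simp add: nth_append)
    next
      case False
      then obtain i where i: "j = length pre + i" using False by (auto dest!: le_Suc_ex simp: not_less)
      have sb: "subspace (A (p ! j) m)" using sub[OF assms(1) j] .
      show ?thesis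
      proof (cases i)
        case 0 then show ?thesis using i sg by (simp add: nth_append)
      next
        case (Suc i')
        have "i' < length Ss" using i j Cons.prems(1) Suc by simp
        hence "finite (Ss ! i') \<and> (\<forall>x\<in>Ss ! i'. g x \<in> A (p ! j) m)"
          using Cons.prems(3)[rule_format, of "Suc i'"] Suc i by simp
        thus ?thesis using i Suc sb real_vector.subspace_sum[OF sb, of "Ss ! i'" g] \<open>i' < length Ss\<close> by (simp add: nth_append)
      qed
    qed
  qed
  have upd: "\<And>v. ?args[length pre := v] = (pre @ [v]) @ map ?sg Ss" by simp
  have "t p ?args = t p (?args[length pre := ?sg S])" by simp
  also have "\<dots> = (\<Sum>x\<in>S. t p (?args[length pre := g x]))"
    by (rule t_sum[OF assms(1) fib j fS])
  also have "\<dots> = (\<Sum>x\<in>S. \<Sum>xs\<in>listset Ss. t p ((pre @ [g x]) @ map g xs))"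
  proof (rule sum.cong[OF refl])
    fix x assume x: "x \<in> S"
    show "t p (?args[length pre := g x]) = (\<Sum>xs\<in>listset Ss. t p ((pre @ [g x]) @ map g xs))"
      unfolding upd
    proof (rule Cons.IH)
      show "length (pre @ [g x]) + length Ss = length p" using Cons.prems(1) by simp
      show "\<forall>j<length (pre @ [g x]). (pre @ [g x]) ! j \<in> A (p ! j) m"
        using Cons.prems(2) fS x by (auto simp: nth_append less_Suc_eq)
      show "\<forall>i<length Ss. finite (Ss ! i) \<and> (\<forall>xa\<in>Ss ! i. g xa \<in> A (p ! (length (pre @ [g x]) + i)) m)"
      proof (intro allI impI)
        fix i assume "i < length Ss"
        thus "finite (Ss ! i) \<and> (\<forall>xa\<in>Ss ! i. g xa \<in> A (p ! (length (pre @ [g x]) + i)) m)"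
          using Cons.prems(3)[rule_format, of "Suc i"] by simp
      qed
    qed
  qed
  also have "\<dots> = (\<Sum>z\<in>S \<times> listset Ss. t p (pre @ map g (fst z # snd z)))"
    by (simp add: sum.cartesian_product case_prod_beta)
  also have "\<dots> = (\<Sum>ys\<in>(\<lambda>z. fst z # snd z) ` (S \<times> listset Ss). t p (pre @ map g ys))"
    by (rule sum.reindex[symmetric, unfolded comp_def]) (auto simp: inj_on_def)
  also have "(\<lambda>z. fst z # snd z) ` (S \<times> listset Ss) = listset (S # Ss)"
    by (auto simp: set_Cons_def image_iff)
  finally show ?case by (simp only: list.map append.simps)
qed

lemma t_scalars:
  assumes "valid_tuple n p" "length pre + length xs = length p"
    "\<forall>j<length pre. pre ! j \<in> A (p ! j) m"
    "\<forall>i<length xs. e (xs ! i) \<in> A (p ! (length pre + i)) m"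
  shows "t p (pre @ map (\<lambda>x. c x *\<^sub>R e x) xs) = prod_list (map c xs) *\<^sub>R t p (pre @ map e xs)"
  using assms(2-4)
proof (induction xs arbitrary: pre)
  case Nil then show ?case by simp
next
  case (Cons x xs)
  have j: "length pre < length p" using Cons.prems(1) by simp
  have ex: "e x \<in> A (p ! length pre) m" using Cons.prems(3) by force
  have prem: "\<forall>j<length (pre @ [v]). (pre @ [v]) ! j \<in> A (p ! j) m" if "v \<in> A (p ! length pre) m" for v
    using Cons.prems(2) that by (auto simp: nth_append less_Suc_eq)
  have rest: "\<forall>i<length xs. e (xs ! i) \<in> A (p ! (length (pre @ [v]) + i)) m" for v :: 'a
  proof (intro allI impI)
    fix i assume "i < length xs"
    thus "e (xs ! i) \<in> A (p ! (length (pre @ [v]) + i)) m"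
      using Cons.prems(3)[rule_format, of "Suc i"] by simp
  qed
  have sb: "subspace (A (p ! length pre) m)" using sub[OF assms(1) j] .
  have cx: "c x *\<^sub>R e x \<in> A (p ! length pre) m" using ex sb real_vector.subspace_scale by blast
  have h1: "t p ((pre @ [c x *\<^sub>R e x]) @ map (\<lambda>x. c x *\<^sub>R e x) xs) = prod_list (map c xs) *\<^sub>R t p ((pre @ [c x *\<^sub>R e x]) @ map e xs)"
    by (rule Cons.IH) (use Cons.prems(1) prem[OF cx] rest in auto)
  have h2: "t p ((pre @ e x # map e xs)[length pre := c x *\<^sub>R e x]) = c x *\<^sub>R t p ((pre @ e x # map e xs)[length pre := e x])"
  proof (rule t_scale[OF assms(1) _ j ex])
    have "fib A p ((pre @ [e x]) @ map e xs) m"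
      unfolding fib_def
    proof (intro conjI allI impI)
      show "length ((pre @ [e x]) @ map e xs) = length p" using Cons.prems(1) by simp
      fix j assume "j < length p"
      show "((pre @ [e x]) @ map e xs) ! j \<in> A (p ! j) m"
      proof (cases "j < length (pre @ [e x])")
        case True then show ?thesis using prem[OF ex, rule_format, of j]
          by (cases "j < length pre") (auto simp: nth_append less_Suc_eq)
      next
        case False
        then obtain i where i: "j = length (pre @ [e x]) + i" using False by (auto dest!: le_Suc_ex simp: not_less)
        hence "i < length xs" using \<open>j < length p\<close> Cons.prems(1) by simp
        thus ?thesis using rest i by (simp add: nth_append)
      qed
    qed
    thus "fib A p (pre @ e x # map e xs) m" by simp
  qed
  have e1: "(pre @ e x # map e xs)[length pre := c x *\<^sub>R e x] = (pre @ [c x *\<^sub>R e x]) @ map e xs" by simp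
  have e2: "(pre @ e x # map e xs)[length pre := e x] = pre @ map e (x # xs)" by simp
  have e3: "pre @ map (\<lambda>x. c x *\<^sub>R e x) (x # xs) = (pre @ [c x *\<^sub>R e x]) @ map (\<lambda>x. c x *\<^sub>R e x) xs" by simp
  show ?case unfolding e3 h1 using h2 unfolding e1 e2 by simp
qed

end


definition skey :: "nat set \<Rightarrow> nat \<times> nat list" where
  "skey X = (card X, sorted_list_of_set X)"

lemma set_less_skey: "set_less X Y \<longleftrightarrow> skey X < skey Y"
  by (auto simp: set_less_def skey_def list_less_def less_prod_def')

lemma skey_inj: "finite X \<Longrightarrow> finite Y \<Longrightarrow> skey X = skey Y \<Longrightarrow> X = Y"
  by (metis prod.inject set_sorted_list_of_set skey_def)

lemma sorted_wrt_key_unique: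
  fixes f :: "'x \<Rightarrow> 'k::linorder"
  assumes "sorted_wrt (\<lambda>x y. f x < f y) xs" "sorted_wrt (\<lambda>x y. f x < f y) ys" "set xs = set ys"
  shows "xs = ys"
  using assms
proof (induction xs arbitrary: ys)
  case Nil then show ?case by simp
next
  case (Cons x xs)
  then obtain y ys' where ys: "ys = y # ys'" by (cases ys) auto
  have "x = y"
  proof (rule ccontr)
    assume ne: "x \<noteq> y"
    have "x \<in> set ys'" using Cons.prems(3) ys ne by (metis list.set_intros(1) set_ConsD)
    hence "f y < f x" using Cons.prems(2) ys by auto
    moreover have "y \<in> set xs" using Cons.prems(3) ys ne by (metis list.set_intros(1) set_ConsD)
    hence "f x < f y" using Cons.prems(1) by auto
    ultimately show False by simp
  qed
  moreover have "x \<notin> set xs" using Cons.prems(1) by auto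
  moreover have "y \<notin> set ys'" using Cons.prems(2) ys by auto
  ultimately have "set xs = set ys'" using Cons.prems(3) ys by auto
  thus ?case using Cons ys \<open>x = y\<close> by simp
qed

lemma set_less_fun: "set_less = (\<lambda>x y. skey x < skey y)"
  by (intro ext) (simp add: set_less_skey)

lemma sorted_wrt_set_less_iff: "sorted_wrt set_less L \<longleftrightarrow> sorted_wrt (\<lambda>x y. skey x < skey y) L"
  by (simp add: set_less_fun)

lemma set_less_unique:
  "sorted_wrt set_less xs \<Longrightarrow> sorted_wrt set_less ys \<Longrightarrow> set xs = set ys \<Longrightarrow> xs = ys"
  using sorted_wrt_key_unique[of skey xs ys] by (simp add: set_less_fun)

lemma strict_key_sorted:
  fixes f :: "'x \<Rightarrow> 'k::linorder"
  shows "sorted_wrt (\<lambda>x y. f x < f y) xs \<longleftrightarrow> sorted (map f xs) \<and> distinct (map f xs)"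
  using strict_sorted_iff[of "map f xs"] unfolding sorted_wrt_map by simp

lemma card_sorted_of_set_less: "sorted_wrt set_less L \<Longrightarrow> sorted (map card L)"
proof -
  assume "sorted_wrt set_less L"
  hence "sorted_wrt (\<lambda>x y. card x \<le> card y) L"
    by (rule sorted_wrt_mono_rel[rotated]) (auto simp: set_less_def)
  thus ?thesis by (simp add: sorted_wrt_map sorted_map)
qed

lemma sort_skey_strict:
  assumes "\<forall>X\<in>set L. finite X" "distinct L"
  shows "sorted_wrt set_less (sort_key skey L)"
proof -
  have "distinct (map skey (sort_key skey L))"
  proof -
    have "inj_on skey (set L)" using assms(1) skey_inj by (auto simp: inj_on_def)
    thus ?thesis using assms(2) by (simp add: distinct_map)
  qed
  thus ?thesis unfolding sorted_wrt_set_less_iff strict_key_sorted by simp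
qed

definition pd :: "nat set list \<Rightarrow> bool" where
  "pd L \<longleftrightarrow> (\<forall>i<length L. \<forall>j<length L. i \<noteq> j \<longrightarrow> L ! i \<inter> L ! j = {})"

lemma pd_Nil[simp]: "pd []" by (simp add: pd_def)

lemma pd_Cons: "pd (X # L) \<longleftrightarrow> X \<inter> \<Union>(set L) = {} \<and> pd L"
proof
  assume a: "pd (X # L)"
  have "X \<inter> L ! j = {}" if "j < length L" for j
    using a that unfolding pd_def by (metis Suc_less_eq length_Cons nat.distinct(1) nth_Cons_0 nth_Cons_Suc zero_less_Suc)
  hence "X \<inter> \<Union>(set L) = {}" unfolding set_conv_nth by blast
  moreover have "pd L" using a unfolding pd_def
    by (metis Suc_less_eq length_Cons nat.inject nth_Cons_Suc)
  ultimately show "X \<inter> \<Union>(set L) = {} \<and> pd L" by simp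
next
  assume a: "X \<inter> \<Union>(set L) = {} \<and> pd L"
  show "pd (X # L)" unfolding pd_def
  proof (intro allI impI)
    fix i j assume ij: "i < length (X # L)" "j < length (X # L)" "i \<noteq> j"
    show "(X # L) ! i \<inter> (X # L) ! j = {}"
    proof (cases i)
      case 0
      then obtain j' where "j = Suc j'" using ij by (cases j) auto
      moreover have "j' < length L" using ij \<open>j = Suc j'\<close> by simp
      hence "L ! j' \<in> set L" by simp
      hence "X \<inter> L ! j' = {}" using a by blast
      thus ?thesis using 0 \<open>j = Suc j'\<close> by simp
    next
      case (Suc i')
      show ?thesis
      proof (cases j)
        case 0
        have "i' < length L" using ij Suc by simp
        hence "L ! i' \<in> set L" by simp
        hence "X \<inter> L ! i' = {}" using a by blast
        thus ?thesis using 0 Suc by auto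
      next
        case (Suc j') thus ?thesis using a \<open>i = Suc i'\<close> ij by (auto simp: pd_def)
      qed
    qed
  qed
qed

lemma pd_w: "\<forall>X\<in>set L. finite X \<Longrightarrow> pd L \<longleftrightarrow> distinct (w L)"
  by (induction L) (auto simp: pd_Cons set_w)

definition gbl :: "nat set list \<Rightarrow> bool" where
  "gbl L \<longleftrightarrow> (\<forall>X\<in>set L. X \<noteq> {} \<and> finite X) \<and> distinct (w L)"

lemma gbl_pd: "gbl L \<Longrightarrow> pd L" by (simp add: gbl_def pd_w)

lemma gbl_distinct: "gbl L \<Longrightarrow> distinct L"
proof -
  assume g: "gbl L"
  have "pd L" using gbl_pd[OF g] .
  show "distinct L" unfolding distinct_conv_nth
  proof (intro allI impI)
    fix i j assume "i < length L" "j < length L" "i \<noteq> j"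
    hence "L ! i \<inter> L ! j = {}" "L ! i \<noteq> {}" using \<open>pd L\<close> g by (auto simp: pd_def gbl_def)
    thus "L ! i \<noteq> L ! j" by auto
  qed
qed

lemma gbl_disj: "gbl L \<Longrightarrow> X \<in> set L \<Longrightarrow> Y \<in> set L \<Longrightarrow> X \<noteq> Y \<Longrightarrow> X \<inter> Y = {}"
  using gbl_pd unfolding pd_def by (metis in_set_conv_nth)

lemma gbl_sub: assumes "gbl Ks" "distinct L" "set L \<subseteq> set Ks" shows "gbl L"
proof -
  have fin: "\<forall>X\<in>set L. X \<noteq> {} \<and> finite X" using assms unfolding gbl_def by auto
  have "pd L" unfolding pd_def
  proof (intro allI impI)
    fix i j assume "i < length L" "j < length L" "i \<noteq> j"
    hence "L ! i \<noteq> L ! j" "L ! i \<in> set Ks" "L ! j \<in> set Ks"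
      using assms(2,3) nth_eq_iff_index_eq by auto
    thus "L ! i \<inter> L ! j = {}" using gbl_disj[OF assms(1)] by blast
  qed
  thus ?thesis using fin pd_w[of L] by (simp add: gbl_def)
qed

lemma mset_concat_perm: "mset L = mset L' \<Longrightarrow> mset (concat L) = mset (concat L')"
proof -
  have "mset (concat L) = sum_mset (image_mset mset (mset L))" for L :: "'x list list"
    by (induction L) auto
  thus "mset L = mset L' \<Longrightarrow> mset (concat L) = mset (concat L')" by metis
qed

lemma mset_w_perm: "mset L = mset L' \<Longrightarrow> mset (w L) = mset (w L')"
  unfolding w_def by (rule mset_concat_perm) simp

lemma gbl_perm: "gbl L \<Longrightarrow> mset L = mset L' \<Longrightarrow> gbl L'"
  unfolding gbl_def using mset_w_perm mset_eq_imp_distinct_iff mset_eq_setD by metis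

lemma cp_alt: "finite I \<Longrightarrow> \<rho> \<in> canon_partitions I \<longleftrightarrow>
   (\<forall>K\<in>set \<rho>. K \<noteq> {}) \<and> distinct (w \<rho>) \<and> \<Union>(set \<rho>) = I \<and> sorted_wrt set_less \<rho>"
proof -
  assume fI: "finite I"
  have "\<Union>(set \<rho>) = I \<Longrightarrow> \<forall>X\<in>set \<rho>. finite X" using fI by (auto intro: finite_subset)
  thus ?thesis unfolding canon_partitions_def using pd_w[of \<rho>] by (auto simp: pd_def)
qed

lemma cp_gbl: "finite I \<Longrightarrow> \<rho> \<in> canon_partitions I \<Longrightarrow> gbl \<rho>"
  by (auto simp: cp_alt gbl_def intro: finite_subset)

lemma cp_finite: assumes "finite I" shows "finite (canon_partitions I)"
proof -
  have "canon_partitions I \<subseteq> {xs. set xs \<subseteq> Pow I \<and> length xs \<le> card (Pow I)}"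
  proof
    fix \<rho> assume r: "\<rho> \<in> canon_partitions I"
    have "distinct \<rho>" using gbl_distinct[OF cp_gbl[OF assms r]] .
    moreover have "set \<rho> \<subseteq> Pow I" using r unfolding canon_partitions_def by auto
    ultimately have "length \<rho> \<le> card (Pow I)"
      by (metis distinct_card card_mono finite_Pow_iff assms)
    thus "\<rho> \<in> {xs. set xs \<subseteq> Pow I \<and> length xs \<le> card (Pow I)}" using \<open>set \<rho> \<subseteq> Pow I\<close> by simp
  qed
  thus ?thesis using finite_lists_length_le[of "Pow I" "card (Pow I)"] assms
    by (auto intro: finite_subset)
qed

lemma distinct_w_union:
  assumes "\<forall>h\<in>set L. \<forall>X\<in>set h. finite X" "distinct (w (concat L))"
  shows "distinct (w (map (\<lambda>h. \<Union>(set h)) L))"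
proof -
  have "mset (w (map (\<lambda>h. \<Union>(set h)) L)) = mset (w (concat L))"
    using assms
  proof (induction L)
    case Nil then show ?case by simp
  next
    case (Cons h L)
    have d: "distinct (w h)" using Cons.prems(2) by (simp add: w_concat)
    have "mset (sorted_list_of_set (\<Union>(set h))) = mset (w h)"
    proof -
      have "finite (\<Union>(set h))" using Cons.prems(1) by auto
      moreover have "set (w h) = \<Union>(set h)" using Cons.prems(1) by (simp add: set_w)
      ultimately show ?thesis using d by (simp add: set_eq_iff_mset_eq_distinct[symmetric])
    qed
    moreover have "mset (w (map (\<lambda>h. \<Union>(set h)) L)) = mset (w (concat L))"
      using Cons.IH Cons.prems by (auto simp: w_concat)
    ultimately show ?case by (simp add: w_concat)
  qed
  thus ?thesis using assms(2) mset_eq_imp_distinct_iff by blast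
qed


abbreviation U :: "nat set list \<Rightarrow> nat set" where "U h \<equiv> \<Union>(set h)"

definition srt :: "nat set list \<Rightarrow> nat set list" where "srt = sort_key skey"

definition norm :: "nat set list list \<Rightarrow> nat set list list" where
  "norm hs = sort_key (\<lambda>h. skey (U h)) (map srt hs)"

definition va :: "nat set list \<Rightarrow> nat set list list \<Rightarrow> bool" where
  "va Ks hs \<longleftrightarrow> hs \<noteq> [] \<and> (\<forall>h\<in>set hs. h \<noteq> []) \<and> distinct (concat hs) \<and> set (concat hs) = set Ks"

lemma ci_va: "hs \<in> comp_index Ks \<Longrightarrow> va Ks hs"
  by (simp add: comp_index_def va_def)

lemma mset_concat_map: "(\<forall>h\<in>set L. mset (f h) = mset h) \<Longrightarrow> mset (concat (map f L)) = mset (concat L)"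
  by (induction L) auto

lemma gbl_blocks: "gbl L \<Longrightarrow> X \<in> set L \<Longrightarrow> X \<noteq> {} \<and> finite X"
  by (simp add: gbl_def)

lemma va_gbl_concat: "gbl Ks \<Longrightarrow> va Ks hs \<Longrightarrow> gbl (concat hs)"
  by (rule gbl_sub) (auto simp: va_def)

lemma va_gbl_U: assumes "gbl Ks" "va Ks hs" shows "gbl (map U hs)"
proof -
  have g: "gbl (concat hs)" using va_gbl_concat[OF assms] .
  have fin: "\<forall>h\<in>set hs. \<forall>X\<in>set h. finite X" using g by (auto simp: gbl_def)
  have "distinct (w (map U hs))"
    by (rule distinct_w_union[OF fin]) (use g in \<open>simp add: gbl_def\<close>)
  moreover have "\<forall>X\<in>set (map U hs). X \<noteq> {} \<and> finite X"
  proof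
    fix X assume "X \<in> set (map U hs)"
    then obtain h where h: "h \<in> set hs" "X = U h" by auto
    have "h \<noteq> []" using assms(2) h by (simp add: va_def)
    then obtain Y where "Y \<in> set h" using last_in_set by blast
    hence "Y \<noteq> {}" using g h by (auto simp: gbl_def)
    thus "X \<noteq> {} \<and> finite X" using h \<open>Y \<in> set h\<close> fin by auto
  qed
  ultimately show ?thesis by (simp add: gbl_def)
qed

lemma srt_props:
  assumes "gbl Ks" "va Ks hs" "h \<in> set hs"
  shows "set (srt h) = set h" "srt h \<noteq> []" "srt h \<in> canon_partitions (U (srt h))" "mset (srt h) = mset h"
proof -
  have dh: "distinct h" using assms(2,3) by (auto simp: va_def distinct_concat_iff)
  have sh: "set h \<subseteq> set Ks" using assms(2,3) by (auto simp: va_def)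
  have hne: "h \<noteq> []" using assms(2,3) by (auto simp: va_def)
  show s: "set (srt h) = set h" by (simp add: srt_def)
  show "srt h \<noteq> []" using s hne by auto
  show "mset (srt h) = mset h" by (simp add: srt_def)
  have fin: "\<forall>X\<in>set h. finite X \<and> X \<noteq> {}" using sh assms(1) by (auto simp: gbl_def)
  have fU: "finite (U (srt h))" using fin s by auto
  have g: "gbl (srt h)" by (rule gbl_sub[OF assms(1)]) (use dh sh s in \<open>auto simp: srt_def\<close>)
  have "sorted_wrt set_less (srt h)" unfolding srt_def by (rule sort_skey_strict) (use fin dh in auto)
  thus "srt h \<in> canon_partitions (U (srt h))"
    using g fU by (simp add: cp_alt gbl_def)
qed

lemma norm_set: "set (map set (norm hs)) = set (map set hs)"
  by (simp add: norm_def srt_def image_image)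

lemma norm_mset_concat: "mset (concat (norm hs)) = mset (concat hs)"
proof -
  have "mset (concat (norm hs)) = mset (concat (map srt hs))"
    by (rule mset_concat_perm) (simp add: norm_def)
  also have "\<dots> = mset (concat hs)" by (rule mset_concat_map) (simp add: srt_def)
  finally show ?thesis .
qed

lemma norm_ci: assumes "gbl Ks" "va Ks hs" shows "norm hs \<in> comp_index Ks"
proof -
  let ?n = "norm hs"
  have sn: "set ?n = srt ` set hs" by (simp add: norm_def)
  have c1: "?n \<noteq> []" using assms(2) sn by (auto simp: va_def)
  have c2: "\<forall>\<rho>\<in>set ?n. \<rho> \<noteq> [] \<and> \<rho> \<in> canon_partitions (U \<rho>)"
    using srt_props[OF assms] sn by auto
  have mc: "mset (concat ?n) = mset (concat hs)" by (rule norm_mset_concat)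
  have c3: "distinct (concat ?n)" using mc assms(2) mset_eq_imp_distinct_iff by (auto simp: va_def)
  have c4: "set (concat ?n) = set Ks" using mc assms(2) by (metis mset_eq_setD va_def)
  have van: "va Ks ?n" using c1 c2 c3 c4 by (simp add: va_def)
  have gU: "gbl (map U ?n)" by (rule va_gbl_U[OF assms(1) van])
  have dU: "distinct (map U ?n)" using gbl_distinct[OF gU] .
  have "inj_on skey (set (map U ?n))" using gU skey_inj by (auto simp: inj_on_def gbl_def)
  hence dk: "distinct (map (\<lambda>h. skey (U h)) ?n)" using dU
    by (simp add: distinct_map inj_on_def)
  have sk: "sorted (map (\<lambda>h. skey (U h)) ?n)" by (simp add: norm_def)
  have "sorted_wrt (\<lambda>g h. skey (U g) < skey (U h)) ?n"
    using strict_key_sorted[of "\<lambda>h. skey (U h)" ?n] dk sk by simp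
  hence c5: "sorted_wrt set_less (map U ?n)" by (simp add: set_less_fun sorted_wrt_map)
  show ?thesis using c1 c2 c3 c4 c5 by (simp add: comp_index_def)
qed

lemma norm_id: assumes "hs \<in> comp_index Ks" shows "norm hs = hs"
proof -
  have "map srt hs = hs"
  proof (rule map_idI)
    fix h assume "h \<in> set hs"
    hence "sorted_wrt set_less h" using assms by (auto simp: comp_index_def canon_partitions_def)
    hence "sorted (map skey h)"
      unfolding sorted_wrt_set_less_iff by (simp add: strict_key_sorted)
    thus "srt h = h" by (simp add: srt_def sort_key_id_if_sorted)
  qed
  moreover have "sorted_wrt (\<lambda>g h. skey (U g) < skey (U h)) hs"
    using assms by (simp add: comp_index_def set_less_fun sorted_wrt_map)
  hence "sorted (map (\<lambda>h. skey (U h)) hs)"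
    using strict_key_sorted[of "\<lambda>h. skey (U h)" hs] by simp
  ultimately show ?thesis by (simp add: norm_def sort_key_id_if_sorted)
qed

lemma ci_unique: assumes "gbl Ks" "hs \<in> comp_index Ks" "hs' \<in> comp_index Ks"
  "set (map set hs) = set (map set hs')" shows "hs = hs'"
proof -
  have key: "sorted_wrt (\<lambda>g h. skey (U g) < skey (U h)) L" if "L \<in> comp_index Ks" for L
    using that by (simp add: comp_index_def set_less_fun sorted_wrt_map)
  have eq: "g = g'" if "g \<in> set hs" "g' \<in> set hs'" "set g = set g'" for g g'
  proof -
    have "sorted_wrt set_less g" "sorted_wrt set_less g'"
      using that assms(2,3) by (auto simp: comp_index_def canon_partitions_def)
    thus ?thesis using that(3) by (rule set_less_unique)
  qed
  have "set hs = set hs'"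
  proof
    show "set hs \<subseteq> set hs'"
    proof
      fix g assume g: "g \<in> set hs"
      have "set g \<in> set (map set hs')" using assms(4) g by (metis image_eqI list.set_map)
      then obtain g' where "g' \<in> set hs'" "set g' = set g" by auto
      thus "g \<in> set hs'" using eq[OF g] by metis
    qed
    show "set hs' \<subseteq> set hs"
    proof
      fix g' assume g': "g' \<in> set hs'"
      have "set g' \<in> set (map set hs)" using assms(4) g' by (metis image_eqI list.set_map)
      then obtain g where "g \<in> set hs" "set g = set g'" by auto
      thus "g' \<in> set hs" using eq[OF _ g'] by metis
    qed
  qed
  thus ?thesis by (rule sorted_wrt_key_unique[OF key[OF assms(2)] key[OF assms(3)]])
qed

lemma norm_eq: assumes "gbl Ks" "va Ks hs" "va Ks hs'" "set (map set hs) = set (map set hs')"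
  shows "norm hs = norm hs'"
  by (rule ci_unique[OF assms(1) norm_ci[OF assms(1,2)] norm_ci[OF assms(1,3)]])
     (use norm_set[of hs] norm_set[of hs'] assms(4) in simp)

lemma ci_finite: assumes "finite (set Ks)" shows "finite (comp_index Ks)"
proof -
  let ?G = "{g. set g \<subseteq> set Ks \<and> length g \<le> length Ks}"
  have fG: "finite ?G" using finite_lists_length_le[OF assms] by simp
  have "comp_index Ks \<subseteq> {hs. set hs \<subseteq> ?G \<and> length hs \<le> length Ks}"
  proof
    fix hs assume h: "hs \<in> comp_index Ks"
    have d: "distinct (concat hs)" and s: "set (concat hs) = set Ks" using h by (auto simp: comp_index_def)
    have lc: "length (concat hs) \<le> length Ks"
      using d s by (metis card_length distinct_card)
    have "length hs \<le> length (concat hs)"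
    proof -
      have "\<forall>g\<in>set hs. 1 \<le> length g" using h by (auto simp: comp_index_def Suc_le_eq)
      hence "sum_list (map (\<lambda>_. 1::nat) hs) \<le> sum_list (map length hs)"
        by (intro sum_list_mono) auto
      thus ?thesis by (simp add: length_concat sum_list_triv)
    qed
    moreover have "\<forall>g\<in>set hs. set g \<subseteq> set Ks \<and> length g \<le> length Ks"
    proof
      fix g assume "g \<in> set hs"
      moreover have "length g \<le> length (concat hs)" using \<open>g \<in> set hs\<close>
        by (simp add: length_concat member_le_sum_list)
      ultimately show "set g \<subseteq> set Ks \<and> length g \<le> length Ks" using s lc by auto
    qed
    ultimately have "set hs \<subseteq> ?G" "length hs \<le> length Ks" using lc by auto
    thus "hs \<in> {hs. set hs \<subseteq> ?G \<and> length hs \<le> length Ks}" by simp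
  qed
  thus ?thesis by (rule finite_subset) (rule finite_lists_length_le[OF fG])
qed


lemma map_swap_adj: "Suc j < length xs \<Longrightarrow> map f (swap_adj j xs) = swap_adj j (map f xs)"
  by (simp add: swap_adj_def map_update)

lemma swap_adj_same: "Suc j < length xs \<Longrightarrow> xs ! j = xs ! Suc j \<Longrightarrow> swap_adj j xs = xs"
  by (metis list_update_id swap_adj_def)

lemma length_swap_adj[simp]: "length (swap_adj j xs) = length xs"
  by (simp add: swap_adj_def)

lemma mset_swap_adj: assumes "Suc j < length xs" shows "mset (swap_adj j xs) = mset xs"
proof -
  obtain us a b vs where d: "xs = us @ a # b # vs" "length us = j" using split_adj[OF assms] .
  have "swap_adj j xs = us @ b # a # vs" using d swap_adj_app by metis
  thus ?thesis using d by (simp add: add_mset_commute)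
qed

lemma set_swap_adj: "Suc j < length xs \<Longrightarrow> set (swap_adj j xs) = set xs"
  by (metis mset_swap_adj set_mset_mset)

lemma gbl_card_sum: "gbl L \<Longrightarrow> card (U L) = sum_list (map card L)"
proof -
  assume g: "gbl L"
  have "length (w L) = card (U L)" using g by (intro length_w_card) (auto simp: gbl_def)
  moreover have "length (w L) = sum_list (map card L)" by (induction L) auto
  ultimately show ?thesis by simp
qed

lemma sum_card_concat: "sum_list (map card (concat hs)) = sum_list (map (\<lambda>h. sum_list (map card h)) hs)"
  by (induction hs) auto

definition srtd :: "nat set list list \<Rightarrow> bool" where
  "srtd hs \<longleftrightarrow> (\<forall>h\<in>set hs. sorted (map card h)) \<and> sorted (map (\<lambda>h. card (U h)) hs)"

lemma cp_sorted_card: "\<rho> \<in> canon_partitions I \<Longrightarrow> sorted (map card \<rho>)"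
  by (simp add: canon_partitions_def card_sorted_of_set_less)

locale setting =
  fixes n :: nat
    and A :: "nat \<Rightarrow> 'm \<Rightarrow> 'a::real_vector set"
    and B :: "nat \<Rightarrow> 'n \<Rightarrow> 'b::real_vector set"
    and C :: "nat \<Rightarrow> 'p \<Rightarrow> 'c::real_vector set"
    and eta0 :: "'m \<Rightarrow> 'n" and tau0 :: "'n \<Rightarrow> 'p"
    and eta :: "nat list \<Rightarrow> 'a list \<Rightarrow> 'b"
    and tau :: "nat list \<Rightarrow> 'b list \<Rightarrow> 'c"
    and J :: "nat set" and m :: 'm and a :: "nat set \<Rightarrow> 'a"
  assumes vA: "vb_family n A" and vB: "vb_family n B" and vC: "vb_family n C"
    and SMe: "sym_morphism n A B eta0 eta" and SMt: "sym_morphism n B C tau0 tau"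
    and JS: "J \<subseteq> {1..n}" and aE: "in_E A J m a"
begin

definition ev :: "nat set list \<Rightarrow> 'b" where
  "ev h = eta (map card h) (map a h)"

definition T :: "nat set list list \<Rightarrow> 'c" where
  "T hs = psgn (concat hs) *\<^sub>R tau (map (\<lambda>h. card (U h)) hs) (map ev hs)"

definition arr :: "nat set list list \<Rightarrow> bool" where
  "arr hs \<longleftrightarrow> gbl (concat hs) \<and> (\<forall>h\<in>set hs. h \<noteq> []) \<and> (\<forall>X\<in>set (concat hs). X \<subseteq> J)"

lemma fJ: "finite J" using JS by (rule finite_subset) simp

lemma cardJ: "card J \<le> n" using card_mono[OF _ JS] by simp

lemma a_in: "X \<noteq> {} \<Longrightarrow> X \<subseteq> J \<Longrightarrow> a X \<in> A (card X) m"
  using aE by (simp add: in_E_def)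

lemma arr_group: assumes "arr hs" "h \<in> set hs" shows "gbl h" "h \<noteq> []" "\<forall>X\<in>set h. X \<subseteq> J"
proof -
  have d: "distinct (concat hs)" using gbl_distinct assms(1) by (simp add: arr_def)
  show "gbl h" by (rule gbl_sub[of "concat hs"]) (use assms d in \<open>auto simp: arr_def distinct_concat_iff\<close>)
  show "h \<noteq> []" "\<forall>X\<in>set h. X \<subseteq> J" using assms by (auto simp: arr_def)
qed

lemma card_U_le: assumes "arr hs" shows "sum_list (map (\<lambda>h. card (U h)) hs) \<le> n"
proof -
  have "sum_list (map (\<lambda>h. card (U h)) hs) = sum_list (map (\<lambda>h. sum_list (map card h)) hs)"
    by (rule arg_cong[where f=sum_list], rule map_cong[OF refl]) (use arr_group[OF assms] gbl_card_sum in auto)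
  also have "\<dots> = card (U (concat hs))"
    using gbl_card_sum[of "concat hs"] assms by (simp add: arr_def sum_card_concat)
  also have "\<dots> \<le> card J" using assms fJ by (intro card_mono) (auto simp: arr_def)
  finally show ?thesis using cardJ by simp
qed

lemma eta_valid: assumes "arr hs" "h \<in> set hs" "sorted (map card h)"
  shows "valid_tuple n (map card h)" "fib A (map card h) (map a h) m"
    "ev h \<in> B (card (U h)) (eta0 m)"
proof -
  have g: "gbl h" "h \<noteq> []" "\<forall>X\<in>set h. X \<subseteq> J" using arr_group[OF assms(1,2)] by auto
  have "sum_list (map card h) = card (U h)" using gbl_card_sum[OF g(1)] by simp
  also have "\<dots> \<le> card J" using g(3) fJ by (intro card_mono) auto
  finally have s: "sum_list (map card h) \<le> n" using cardJ by simp
  have "\<forall>i\<in>set (map card h). 1 \<le> i" using g(1)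
    by (auto simp: gbl_def Suc_le_eq card_gt_0_iff)
  thus vt: "valid_tuple n (map card h)" using s g(2) assms(3) by (simp add: valid_tuple_def)
  show fb: "fib A (map card h) (map a h) m"
    using g by (auto simp: fib_def gbl_def intro!: a_in)
  have "ev h \<in> B (sum_list (map card h)) (eta0 m)"
    unfolding ev_def by (rule t_fibre[OF SMe vA vt fb])
  thus "ev h \<in> B (card (U h)) (eta0 m)" using gbl_card_sum[OF g(1)] by simp
qed

lemma tau_valid: assumes "arr hs" "srtd hs" "hs \<noteq> []"
  shows "valid_tuple n (map (\<lambda>h. card (U h)) hs)" "fib B (map (\<lambda>h. card (U h)) hs) (map ev hs) (eta0 m)"
proof -
  have "\<forall>i\<in>set (map (\<lambda>h. card (U h)) hs). 1 \<le> i"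
  proof
    fix i assume "i \<in> set (map (\<lambda>h. card (U h)) hs)"
    then obtain h where h: "h \<in> set hs" "i = card (U h)" by auto
    have g: "gbl h" "h \<noteq> []" using arr_group[OF assms(1) h(1)] by auto
    then obtain X where "X \<in> set h" using last_in_set by blast
    hence "X \<noteq> {}" "finite (U h)" using g by (auto simp: gbl_def)
    hence "card (U h) > 0" using \<open>X \<in> set h\<close> by (auto simp: card_gt_0_iff)
    thus "1 \<le> i" using h by simp
  qed
  thus "valid_tuple n (map (\<lambda>h. card (U h)) hs)"
    using assms card_U_le[OF assms(1)] by (simp add: valid_tuple_def srtd_def)
  show "fib B (map (\<lambda>h. card (U h)) hs) (map ev hs) (eta0 m)"
    using eta_valid(3)[OF assms(1)] assms(2) by (auto simp: fib_def srtd_def)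
qed

lemma sgn_sq: "(if even c then 1 else -1 :: real) * (-1) ^ (c * c) = 1"
  by (auto simp: power_mult)

lemma T_inner_swap:
  assumes "arr hs" "srtd hs" "j < length hs" "Suc i < length (hs ! j)"
    "card (hs ! j ! i) = card (hs ! j ! Suc i)"
  shows "T (hs[j := swap_adj i (hs ! j)]) = T hs"
proof -
  let ?g = "hs ! j"
  let ?g' = "swap_adj i ?g"
  let ?hs' = "hs[j := ?g']"
  obtain us x y vs where g: "?g = us @ x # y # vs" "length us = i" using split_adj[OF assms(4)] .
  have g': "?g' = us @ y # x # vs" using g swap_adj_app by metis
  have hsd: "hs = take j hs @ ?g # drop (Suc j) hs" using assms(3) by (simp add: id_take_nth_drop)
  have hsd': "?hs' = take j hs @ ?g' # drop (Suc j) hs" using assms(3) by (simp add: upd_conv_take_nth_drop)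
  let ?P = "concat (take j hs) @ us" and ?S = "vs @ concat (drop (Suc j) hs)"
  have c1: "concat hs = ?P @ x # y # ?S" using arg_cong[OF hsd, of concat] g by simp
  have c2: "concat ?hs' = ?P @ y # x # ?S" using arg_cong[OF hsd', of concat] g' by simp
  have gb: "gbl (concat hs)" using assms(1) by (simp add: arr_def)
  have "psgn (concat ?hs') = (-1) ^ (card x * card y) * psgn (concat hs)"
  proof -
    have "concat ?hs' = swap_adj (length ?P) (concat hs)" by (simp only: c1 c2 swap_adj_app)
    moreover have "(concat hs) ! length ?P = x" "(concat hs) ! Suc (length ?P) = y" using c1 by (auto simp: nth_append)
    moreover have "Suc (length ?P) < length (concat hs)" using c1 by simp
    ultimately show ?thesis using psgn_swap_adj[of "length ?P" "concat hs"] gb by (auto simp: gbl_def)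
  qed
  moreover have cx: "card x = card y" using assms(5) g by (simp add: nth_append)
  ultimately have ps: "psgn (concat ?hs') = (-1) ^ (card x * card x) * psgn (concat hs)" by simp
  have hj: "?g \<in> set hs" using assms(3) by simp
  have sj: "sorted (map card ?g)" using assms(2) hj by (simp add: srtd_def)
  have Ueq: "U ?g' = U ?g" using set_swap_adj[OF assms(4)] by simp
  have idx: "map (\<lambda>h. card (U h)) ?hs' = map (\<lambda>h. card (U h)) hs"
  proof -
    have "card (U ?g') = map (\<lambda>h. card (U h)) hs ! j" using Ueq assms(3) by simp
    thus ?thesis by (simp only: map_update list_update_id)
  qed
  have mc: "map card ?g' = map card ?g"
    unfolding map_swap_adj[OF assms(4)] by (rule swap_adj_same) (use assms(4,5) in simp_all)
  have evg: "ev ?g' = (if even (card x) then 1 else -1) *\<^sub>R ev ?g"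
  proof -
    have "ev ?g' = eta (map card ?g) (swap_adj i (map a ?g))"
    proof -
      have mc': "swap_adj i (map card ?g) = map card ?g"
        by (rule swap_adj_same) (use assms(4,5) in simp_all)
      show ?thesis unfolding ev_def map_swap_adj[OF assms(4)] mc' ..
    qed
    also have "\<dots> = (if even (map card ?g ! i) then 1 else -1) *\<^sub>R eta (map card ?g) (map a ?g)"
      by (rule t_skew[OF SMe vA eta_valid(1,2)[OF assms(1) hj sj]])
         (use assms(4,5) in auto)
    finally show ?thesis using g by (simp add: ev_def nth_append)
  qed
  have args: "map ev ?hs' = (map ev hs)[j := (if even (card x) then 1 else -1) *\<^sub>R ev ?g]"
    using evg by (simp add: map_update)
  have vt: "valid_tuple n (map (\<lambda>h. card (U h)) hs)" "fib B (map (\<lambda>h. card (U h)) hs) (map ev hs) (eta0 m)"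
    using tau_valid[OF assms(1,2)] assms(3) by (metis length_0_conv not_less0)+
  have "tau (map (\<lambda>h. card (U h)) hs) ((map ev hs)[j := (if even (card x) then 1 else -1) *\<^sub>R ev ?g])
      = (if even (card x) then 1 else -1) *\<^sub>R tau (map (\<lambda>h. card (U h)) hs) ((map ev hs)[j := ev ?g])"
    by (rule t_scale[OF SMt vB vt]) (use assms(3) eta_valid(3)[OF assms(1) hj sj] in auto)
  moreover have "(map ev hs)[j := ev ?g] = map ev hs" by (simp add: map_update[symmetric])
  ultimately have "tau (map (\<lambda>h. card (U h)) ?hs') (map ev ?hs')
     = (if even (card x) then 1 else -1) *\<^sub>R tau (map (\<lambda>h. card (U h)) hs) (map ev hs)"
    using idx args by simp
  thus ?thesis unfolding T_def ps using sgn_sq[of "card x"] by (simp add: mult.commute)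
qed

lemma T_outer_swap:
  assumes "arr hs" "srtd hs" "Suc j < length hs" "card (U (hs ! j)) = card (U (hs ! Suc j))"
  shows "T (swap_adj j hs) = T hs"
proof -
  obtain P g h S where d: "hs = P @ g # h # S" "length P = j" using split_adj[OF assms(3)] .
  have d': "swap_adj j hs = P @ h # g # S" using d swap_adj_app by metis
  have gb: "gbl (concat hs)" using assms(1) by (simp add: arr_def)
  have cg: "concat hs = concat P @ g @ h @ concat S" using d by simp
  have fin: "\<forall>X\<in>set g. finite X" "\<forall>X\<in>set h. finite X" using gb d by (auto simp: gbl_def)
  have "distinct (w g @ w h)" using gb cg by (simp add: gbl_def) blast
  hence ps: "psgn (concat (swap_adj j hs)) = (-1) ^ (card (U g) * card (U h)) * psgn (concat hs)"
    using psgn_swap_seg[of g h "concat P" "concat S"] fin d' cg by simp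
  have gj: "hs ! j = g" "hs ! Suc j = h" using d by (auto simp: nth_append)
  have idx: "map (\<lambda>h. card (U h)) (swap_adj j hs) = map (\<lambda>h. card (U h)) hs"
    unfolding map_swap_adj[OF assms(3)] by (rule swap_adj_same) (use assms(3,4) in simp_all)
  have vt: "valid_tuple n (map (\<lambda>h. card (U h)) hs)" "fib B (map (\<lambda>h. card (U h)) hs) (map ev hs) (eta0 m)"
    using tau_valid[OF assms(1,2)] assms(3) by (metis length_0_conv not_less0)+
  have "tau (map (\<lambda>h. card (U h)) hs) (swap_adj j (map ev hs))
      = (if even (map (\<lambda>h. card (U h)) hs ! j) then 1 else -1) *\<^sub>R tau (map (\<lambda>h. card (U h)) hs) (map ev hs)"
    by (rule t_skew[OF SMt vB vt]) (use assms(3,4) in auto)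
  hence "tau (map (\<lambda>h. card (U h)) (swap_adj j hs)) (map ev (swap_adj j hs))
      = (if even (card (U g)) then 1 else -1) *\<^sub>R tau (map (\<lambda>h. card (U h)) hs) (map ev hs)"
    using idx map_swap_adj[OF assms(3), of ev] gj assms(3) by simp
  moreover have "card (U h) = card (U g)" using assms(4) gj by simp
  ultimately have "T (swap_adj j hs) = ((-1) ^ (card (U g) * card (U g)) * psgn (concat hs)) *\<^sub>R
      ((if even (card (U g)) then 1 else -1) *\<^sub>R tau (map (\<lambda>h. card (U h)) hs) (map ev hs))"
    unfolding T_def ps by simp
  also have "\<dots> = (((if even (card (U g)) then 1 else -1) * (-1) ^ (card (U g) * card (U g))) * psgn (concat hs)) *\<^sub>R
      tau (map (\<lambda>h. card (U h)) hs) (map ev hs)"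
    by (simp only: scaleR_scaleR mult_ac)
  finally have "T (swap_adj j hs) = (1 * psgn (concat hs)) *\<^sub>R tau (map (\<lambda>h. card (U h)) hs) (map ev hs)"
    unfolding sgn_sq .
  thus ?thesis unfolding T_def[of hs] by simp
qed

end


lemma skey_le_card: "skey X \<le> skey Y \<Longrightarrow> card X \<le> card Y"
  by (auto simp: skey_def less_eq_prod_def)

lemma sorted_skey_card: "sorted (map skey L) \<Longrightarrow> sorted (map card L)"
proof -
  assume "sorted (map skey L)"
  hence "sorted_wrt (\<lambda>x y. skey x \<le> skey y) L" by (simp add: sorted_wrt_map)
  hence "sorted_wrt (\<lambda>x y. card x \<le> card y) L"
    by (rule sorted_wrt_mono_rel[rotated]) (auto intro: skey_le_card)
  thus ?thesis by (simp add: sorted_wrt_map)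
qed

lemma sorted_skeyU_card: "sorted (map (\<lambda>h. skey (U h)) L) \<Longrightarrow> sorted (map (\<lambda>h. card (U h)) L)"
  using sorted_skey_card[of "map U L"] by (simp add: comp_def)

lemma srt_sorted_card: "sorted (map card (srt g))"
  by (rule sorted_skey_card) (simp add: srt_def)

lemma concat_update: "j < length hs \<Longrightarrow> concat (hs[j := g]) = concat (take j hs) @ g @ concat (drop (Suc j) hs)"
  by (simp add: upd_conv_take_nth_drop)

lemma concat_nth: "j < length hs \<Longrightarrow> concat hs = concat (take j hs) @ hs ! j @ concat (drop (Suc j) hs)"
  by (metis concat.simps(2) concat_append id_take_nth_drop)

context setting begin

lemma arr_update: assumes "arr hs" "j < length hs" "mset g = mset (hs ! j)"
  shows "arr (hs[j := g])"
proof -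
  have m: "mset (concat (hs[j := g])) = mset (concat hs)"
    using concat_update[OF assms(2)] concat_nth[OF assms(2)] assms(3) by simp
  have "hs ! j \<noteq> []" using assms(1,2) by (auto simp: arr_def)
  hence "g \<noteq> []" using assms(3) by auto
  moreover have "\<forall>h\<in>set (hs[j := g]). h \<noteq> []" using assms(1) \<open>g \<noteq> []\<close>
    by (auto simp: arr_def dest: set_update_subset_insert[THEN subsetD])
  moreover have "set (concat (hs[j := g])) = set (concat hs)" using m by (metis set_mset_mset)
  ultimately show ?thesis using assms(1) gbl_perm[of "concat hs" "concat (hs[j := g])"] m
    by (simp add: arr_def)
qed

lemma srtd_update: assumes "srtd hs" "j < length hs" "set g = set (hs ! j)" "sorted (map card g)"
  shows "srtd (hs[j := g])"
proof -
  have "map (\<lambda>h. card (U h)) (hs[j := g]) = map (\<lambda>h. card (U h)) hs"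
  proof -
    have "card (U g) = map (\<lambda>h. card (U h)) hs ! j" using assms(2,3) by simp
    thus ?thesis by (simp only: map_update list_update_id)
  qed
  thus ?thesis using assms(1,4) by (auto simp: srtd_def dest: set_update_subset_insert[THEN subsetD])
qed

lemma T_group:
  assumes "arr hs" "srtd hs" "j < length hs" "mset g = mset (hs ! j)" "sorted (map card g)"
  shows "T (hs[j := g]) = T hs"
proof -
  have "(\<lambda>g. T (hs[j := g])) g = (\<lambda>g. T (hs[j := g])) (hs ! j)"
  proof (rule bubble[where key = card])
    fix zs i assume z: "mset zs = mset (hs ! j)" "sorted (map card zs)" "Suc i < length zs"
      "card (zs ! i) = card (zs ! Suc i)"
    let ?hz = "hs[j := zs]"
    have a: "arr ?hz" by (rule arr_update[OF assms(1,3) z(1)])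
    have s: "srtd ?hz" by (rule srtd_update[OF assms(2,3) _ z(2)]) (metis z(1) set_mset_mset)
    have "T (?hz[j := swap_adj i (?hz ! j)]) = T ?hz"
      by (rule T_inner_swap[OF a s]) (use assms(3) z in auto)
    thus "T (hs[j := swap_adj i zs]) = T (hs[j := zs])" using assms(3) by simp
  next
    show "mset g = mset (hs ! j)" by (rule assms(4))
    show "sorted (map card (hs ! j))" using assms(2,3) by (simp add: srtd_def)
    show "sorted (map card g)" by (rule assms(5))
  qed
  thus ?thesis by simp
qed

lemma T_srt: assumes "arr hs" "srtd hs"
  shows "arr (map srt hs) \<and> srtd (map srt hs) \<and> T (map srt hs) = T hs"
proof -
  have "k \<le> length hs \<Longrightarrow> arr (map srt (take k hs) @ drop k hs) \<and> srtd (map srt (take k hs) @ drop k hs)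
          \<and> T (map srt (take k hs) @ drop k hs) = T hs" for k
  proof (induction k)
    case 0 then show ?case using assms by simp
  next
    case (Suc k)
    let ?h = "map srt (take k hs) @ drop k hs"
    have k: "k < length hs" using Suc.prems by simp
    have IH: "arr ?h" "srtd ?h" "T ?h = T hs" using Suc.IH Suc.prems by auto
    have hk: "?h ! k = hs ! k" using k by (simp add: nth_append)
    have lk: "k < length ?h" using k by simp
    have eq: "map srt (take (Suc k) hs) @ drop (Suc k) hs = ?h[k := srt (hs ! k)]"
      using k by (simp add: take_Suc_conv_app_nth list_update_append Cons_nth_drop_Suc[symmetric])
    have ms: "mset (srt (hs ! k)) = mset (?h ! k)" using hk by (simp add: srt_def)
    have "arr (?h[k := srt (hs ! k)])" by (rule arr_update[OF IH(1) lk ms])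
    moreover have "srtd (?h[k := srt (hs ! k)])"
      by (rule srtd_update[OF IH(2) lk _ srt_sorted_card]) (simp only: hk, simp add: srt_def)
    moreover have "T (?h[k := srt (hs ! k)]) = T ?h"
      by (rule T_group[OF IH(1,2) lk ms srt_sorted_card])
    ultimately show ?case using eq IH(3) by simp
  qed
  from this[of "length hs"] show ?thesis by simp
qed

lemma T_outer:
  assumes "arr hs" "srtd hs" "mset hs' = mset hs" "sorted (map (\<lambda>h. card (U h)) hs')"
  shows "T hs' = T hs"
proof (rule bubble[where key = "\<lambda>h. card (U h)"])
  fix zs j assume z: "mset zs = mset hs" "sorted (map (\<lambda>h. card (U h)) zs)" "Suc j < length zs"
    "card (U (zs ! j)) = card (U (zs ! Suc j))"
  have sz: "set zs = set hs" using z(1) by (metis set_mset_mset)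
  have mc: "mset (concat zs) = mset (concat hs)" by (rule mset_concat_perm[OF z(1)])
  have sc: "set (concat zs) = set (concat hs)" using mc by (metis set_mset_mset)
  have a: "arr zs" using assms(1) gbl_perm[of "concat hs" "concat zs"] mc sz sc by (simp add: arr_def)
  have s: "srtd zs" using assms(2) z(2) sz by (simp add: srtd_def)
  show "T (swap_adj j zs) = T zs" by (rule T_outer_swap[OF a s z(3,4)])
next
  show "mset hs' = mset hs" by (rule assms(3))
  show "sorted (map (\<lambda>h. card (U h)) hs)" using assms(2) by (simp add: srtd_def)
  show "sorted (map (\<lambda>h. card (U h)) hs')" by (rule assms(4))
qed

lemma T_norm: assumes "arr hs" "srtd hs" shows "T (norm hs) = T hs"
proof -
  have s: "arr (map srt hs)" "srtd (map srt hs)" "T (map srt hs) = T hs" using T_srt[OF assms] by auto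
  have "T (norm hs) = T (map srt hs)"
  proof (rule T_outer[OF s(1,2)])
    show "mset (norm hs) = mset (map srt hs)" by (simp add: norm_def)
    show "sorted (map (\<lambda>h. card (U h)) (norm hs))"
      by (rule sorted_skeyU_card) (simp add: norm_def)
  qed
  thus ?thesis using s(3) by simp
qed

end


fun rc :: "nat \<Rightarrow> nat list \<Rightarrow> nat set list" where
  "rc s [] = []"
| "rc s (x # p) = {s + 1 .. s + x} # rc (s + x) p"

lemma rc_eq: "map (\<lambda>j. {s + sum_list (take j p) + 1 .. s + sum_list (take (Suc j) p)}) [0..<length p] = rc s p"
proof (induction p arbitrary: s)
  case Nil then show ?case by simp
next
  case (Cons x p)
  have "[0..<length (x # p)] = 0 # map Suc [0..<length p]"
    by (simp only: length_Cons upt_conv_Cons[OF zero_less_Suc] map_Suc_upt)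
  hence "map (\<lambda>j. {s + sum_list (take j (x # p)) + 1 .. s + sum_list (take (Suc j) (x # p))}) [0..<length (x # p)]
     = {s + 1 .. s + x} # map (\<lambda>j. {(s + x) + sum_list (take j p) + 1 .. (s + x) + sum_list (take (Suc j) p)}) [0..<length p]"
    by (simp add: add.assoc)
  thus ?case using Cons.IH[of "s + x"] by simp
qed

lemma rho_can_rc: "rho_can p = rc 0 p"
  using rc_eq[of 0 p] by (simp add: rho_can_def)

lemma length_rc[simp]: "length (rc s p) = length p"
  by (induction p arbitrary: s) auto

lemma card_rc: "i < length p \<Longrightarrow> card (rc s p ! i) = p ! i"
  by (induction p arbitrary: s i) (auto simp: nth_Cons split: nat.splits)

lemma w_rc: "w (rc s p) = [s + 1 ..< s + sum_list p + 1]"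
proof (induction p arbitrary: s)
  case Nil then show ?case by simp
next
  case (Cons x p)
  have "sorted_list_of_set {s + 1 .. s + x} = [s + 1 ..< s + x + 1]"
    by (metis Suc_eq_plus1 atLeastLessThanSuc_atLeastAtMost sorted_list_of_set_range)
  moreover have "[s + 1 ..< (s + x + 1) + sum_list p] = [s + 1 ..< s + x + 1] @ [s + x + 1 ..< (s + x + 1) + sum_list p]"
    by (rule upt_add_eq_append) simp
  moreover have "(s + x + 1) + sum_list p = s + x + sum_list p + 1" "s + sum_list (x # p) + 1 = s + x + sum_list p + 1"
    by simp_all
  ultimately show ?case using Cons.IH[of "s + x"] by (simp only: w_simps rc.simps)
qed

lemma rc_nonempty: "\<forall>i\<in>set p. 1 \<le> i \<Longrightarrow> X \<in> set (rc s p) \<Longrightarrow> X \<noteq> {}"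
  by (induction p arbitrary: s) auto

lemma rc_finite: "X \<in> set (rc s p) \<Longrightarrow> finite X"
  by (induction p arbitrary: s) auto

lemma rc_gbl: "\<forall>i\<in>set p. 1 \<le> i \<Longrightarrow> gbl (rc s p)"
  unfolding gbl_def w_rc using rc_nonempty rc_finite by auto

lemma psgn_rc: "psgn (rc s p) = 1"
  by (simp only: psgn_w w_rc inv'_sorted[OF sorted_upt]) simp

lemma listset_iff: "xs \<in> listset As \<longleftrightarrow> length xs = length As \<and> (\<forall>i<length xs. xs ! i \<in> As ! i)"
proof (induction As arbitrary: xs)
  case Nil then show ?case by auto
next
  case (Cons A As)
  note IH = Cons.IH
  show ?case
  proof (cases xs)
    case Nil then show ?thesis by (auto simp: set_Cons_def)
  next
    case (Cons y ys)
    have "xs \<in> listset (A # As) \<longleftrightarrow> y \<in> A \<and> ys \<in> listset As" using Cons by (auto simp: set_Cons_def)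
    also have "\<dots> \<longleftrightarrow> length xs = length (A # As) \<and> (\<forall>i<length xs. xs ! i \<in> (A # As) ! i)"
      using Cons IH[of ys] by (auto simp: nth_Cons split: nat.splits)
    finally show ?thesis .
  qed
qed

lemma listset_finite: "\<forall>A\<in>set As. finite A \<Longrightarrow> finite (listset As)"
proof (induction As)
  case Nil then show ?case by simp
next
  case (Cons A As)
  have "set_Cons A (listset As) = (\<lambda>z. fst z # snd z) ` (A \<times> listset As)"
    by (auto simp: set_Cons_def image_iff)
  thus ?case using Cons by simp
qed

definition rl :: "nat set list \<Rightarrow> nat set list \<Rightarrow> nat set \<Rightarrow> nat set" where
  "rl Ks Ks' X = the (map_of (zip Ks Ks') X)"

locale two =
  fixes Ks Ks' :: "nat set list"
  assumes g1: "gbl Ks" and g2: "gbl Ks'" and len: "length Ks = length Ks'"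
    and cards: "\<And>i. i < length Ks \<Longrightarrow> card (Ks ! i) = card (Ks' ! i)"
begin

abbreviation "\<phi> \<equiv> rl Ks Ks'"
abbreviation "\<psi> \<equiv> rl Ks' Ks"

lemma d1: "distinct Ks" using gbl_distinct[OF g1] .
lemma d2: "distinct Ks'" using gbl_distinct[OF g2] .

lemma phi_nth: "i < length Ks \<Longrightarrow> \<phi> (Ks ! i) = Ks' ! i"
  unfolding rl_def using map_of_zip_nth[OF len d1] len by simp

lemma psi_nth: "i < length Ks \<Longrightarrow> \<psi> (Ks' ! i) = Ks ! i"
  unfolding rl_def using map_of_zip_nth[OF len[symmetric] d2] len by simp

lemma map_phi: "map \<phi> Ks = Ks'"
  by (rule nth_equalityI) (auto simp: len phi_nth)

lemma psi_phi: "X \<in> set Ks \<Longrightarrow> \<psi> (\<phi> X) = X"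
  by (metis in_set_conv_nth phi_nth psi_nth)

lemma phi_set: "X \<in> set Ks \<Longrightarrow> \<phi> X \<in> set Ks'"
  by (metis in_set_conv_nth len nth_mem phi_nth)

lemma phi_card: "X \<in> set Ks \<Longrightarrow> card (\<phi> X) = card X"
  by (metis cards in_set_conv_nth phi_nth)

lemma phi_inj: "inj_on \<phi> (set Ks)"
  by (metis inj_onI psi_phi)

lemma phi_image: "\<phi> ` set Ks = set Ks'"
  by (metis map_phi set_map)

lemma va_transport: assumes "va Ks L" shows "va Ks' (map (map \<phi>) L)"
proof -
  have sub: "set (concat L) = set Ks" using assms by (simp add: va_def)
  have "distinct (map \<phi> (concat L))"
    using assms phi_inj sub by (simp add: va_def distinct_map)
  moreover have "set (map \<phi> (concat L)) = set Ks'" using sub phi_image by simp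
  moreover have "concat (map (map \<phi>) L) = map \<phi> (concat L)" by (simp add: map_concat)
  ultimately show ?thesis using assms by (auto simp: va_def)
qed

lemma ss_transport: "set (map set (map (map \<phi>) L)) = (\<lambda>S. \<phi> ` S) ` set (map set L)"
  by (auto simp: image_image)

end

lemma two_sym: "two Ks Ks' \<Longrightarrow> two Ks' Ks"
  unfolding two_def by auto


lemma va_group_gbl: assumes "gbl Ks" "va Ks L" "\<rho> \<in> set L" shows "gbl \<rho>"
proof (rule gbl_sub[OF assms(1)])
  show "distinct \<rho>" using assms(2,3) by (auto simp: va_def distinct_concat_iff)
  show "set \<rho> \<subseteq> set Ks" using assms(2,3) by (auto simp: va_def)
qed

context two begin

lemma va_map_gbl: assumes "va Ks L" "\<rho> \<in> set L" shows "gbl (map \<phi> \<rho>)"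
proof (rule gbl_sub[OF g2])
  have g: "gbl \<rho>" by (rule va_group_gbl[OF g1 assms])
  have s: "set \<rho> \<subseteq> set Ks" using assms by (auto simp: va_def)
  show "distinct (map \<phi> \<rho>)" using gbl_distinct[OF g] phi_inj s by (simp add: distinct_map inj_on_subset)
  show "set (map \<phi> \<rho>) \<subseteq> set Ks'" using s phi_set by auto
qed

lemma map_card_transport: "set \<rho> \<subseteq> set Ks \<Longrightarrow> map card (map \<phi> \<rho>) = map card \<rho>"
  using phi_card by (induction \<rho>) auto

lemma cardU_transport: assumes "va Ks L" "\<rho> \<in> set L" shows "card (U (map \<phi> \<rho>)) = card (U \<rho>)"
proof -
  have s: "set \<rho> \<subseteq> set Ks" using assms by (auto simp: va_def)
  have "card (U (map \<phi> \<rho>)) = sum_list (map card (map \<phi> \<rho>))" by (rule gbl_card_sum[OF va_map_gbl[OF assms]])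
  also have "\<dots> = sum_list (map card \<rho>)" by (simp only: map_card_transport[OF s])
  also have "\<dots> = card (U \<rho>)" by (rule gbl_card_sum[OF va_group_gbl[OF g1 assms], symmetric])
  finally show ?thesis .
qed

lemma sign_transport: assumes "mset L = mset Ks" shows "psgn L * psgn (map \<phi> L) = psgn Ks * psgn Ks'"
proof -
  have "(\<lambda>L. psgn L * psgn (map \<phi> L)) L = (\<lambda>L. psgn L * psgn (map \<phi> L)) Ks"
  proof (rule bubble[where key = "\<lambda>_. 0::nat"])
    fix zs j assume z: "mset zs = mset Ks" "Suc j < length zs"
    have gz: "gbl zs" by (rule gbl_perm[OF g1 z(1)[symmetric]])
    have "mset (map \<phi> zs) = mset Ks'" using z(1) map_phi by (metis mset_map)
    hence gz': "gbl (map \<phi> zs)" using gbl_perm[OF g2] by metis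
    have sz: "set zs = set Ks" using z(1) by (metis set_mset_mset)
    have c: "card (\<phi> (zs ! j)) = card (zs ! j)" "card (\<phi> (zs ! Suc j)) = card (zs ! Suc j)"
      using phi_card sz z(2) nth_mem[of j zs] nth_mem[of "Suc j" zs] by auto
    have p1: "psgn (swap_adj j zs) = (-1) ^ (card (zs ! j) * card (zs ! Suc j)) * psgn zs"
      by (rule psgn_swap_adj[OF z(2)]) (use gz in \<open>auto simp: gbl_def\<close>)
    have p2: "psgn (swap_adj j (map \<phi> zs)) = (-1) ^ (card (zs ! j) * card (zs ! Suc j)) * psgn (map \<phi> zs)"
      using psgn_swap_adj[of j "map \<phi> zs"] z(2) gz' c by (auto simp: gbl_def)
    have "((-1::real) ^ (card (zs ! j) * card (zs ! Suc j))) * ((-1) ^ (card (zs ! j) * card (zs ! Suc j))) = 1"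
      by (simp add: power_mult_distrib[symmetric])
    thus "psgn (swap_adj j zs) * psgn (map \<phi> (swap_adj j zs)) = psgn zs * psgn (map \<phi> zs)"
      unfolding map_swap_adj[OF z(2)] p1 p2 by (simp add: algebra_simps)
  qed (use assms in \<open>simp_all add: map_replicate_const\<close>)
  thus ?thesis using map_phi by simp
qed

end

context setting begin

lemma relabel:
  assumes fI: "finite I" and IJ: "I \<subseteq> J" and pi: "\<pi> \<in> canon_partitions I"
  shows "comp_components tau eta (map card \<pi>) (map a \<pi>) = psgn \<pi> *\<^sub>R (\<Sum>hs\<in>comp_index \<pi>. T hs)"
proof -
  let ?p = "map card \<pi>"
  let ?Q = "rho_can ?p"
  have gpi: "gbl \<pi>" by (rule cp_gbl[OF fI pi])
  have Qrc: "?Q = rc 0 ?p" by (rule rho_can_rc)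
  have pos: "\<forall>i\<in>set ?p. 1 \<le> i"
  proof
    fix i assume "i \<in> set ?p"
    then obtain X where X: "X \<in> set \<pi>" "i = card X" by auto
    hence "X \<noteq> {}" "finite X" using gpi by (auto simp: gbl_def)
    hence "card X > 0" by (simp add: card_gt_0_iff)
    thus "1 \<le> i" using X by simp
  qed
  have gQ: "gbl ?Q" unfolding Qrc by (rule rc_gbl[OF pos])
  have lQ: "length ?Q = length \<pi>" unfolding Qrc by simp
  have cQ: "card (?Q ! i) = card (\<pi> ! i)" if "i < length ?Q" for i
  proof -
    have "i < length ?p" using that lQ by simp
    hence "card (rc 0 ?p ! i) = ?p ! i" by (rule card_rc)
    thus ?thesis using \<open>i < length ?p\<close> unfolding Qrc by simp
  qed
  interpret t1: two ?Q \<pi> by unfold_locales (use gQ gpi lQ cQ in auto)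
  interpret t2: two \<pi> ?Q by (rule two_sym) unfold_locales
  let ?phi = "rl ?Q \<pi>" and ?psi = "rl \<pi> ?Q"
  let ?a' = "\<lambda>K. the (map_of (zip ?Q (map a \<pi>)) K)"
  have a': "?a' X = a (?phi X)" if Xin: "X \<in> set ?Q" for X
  proof -
    obtain i where i: "i < length ?Q" "X = ?Q ! i" using Xin in_set_conv_nth[of X ?Q] by blast
    have l2: "length ?Q = length (map a \<pi>)" using lQ by simp
    have l3: "i < length (map a \<pi>)" using i(1) lQ by simp
    have "map_of (zip ?Q (map a \<pi>)) (?Q ! i) = Some (map a \<pi> ! i)"
      by (rule map_of_zip_nth[OF l2 t1.d1 l3])
    hence e1: "?a' (?Q ! i) = map a \<pi> ! i" by (simp only: option.sel)
    have e2: "map a \<pi> ! i = a (\<pi> ! i)" using l3 by simp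
    have e3: "?phi (?Q ! i) = \<pi> ! i" using i(1) by (rule t1.phi_nth)
    show ?thesis unfolding i(2) e1 e2 e3 ..
  qed
  have psQ: "psgn ?Q = 1" unfolding Qrc by (rule psgn_rc)
  have cc: "comp_components tau eta ?p (map a \<pi>) =
     (\<Sum>gs\<in>comp_index ?Q. psgn (concat gs) *\<^sub>R tau (map (\<lambda>\<rho>. card (U \<rho>)) gs)
        (map (\<lambda>\<rho>. eta (map card \<rho>) (map ?a' \<rho>)) gs))"
    by (simp add: comp_components_def Let_def)
  have trm: "psgn (concat gs) *\<^sub>R tau (map (\<lambda>\<rho>. card (U \<rho>)) gs) (map (\<lambda>\<rho>. eta (map card \<rho>) (map ?a' \<rho>)) gs)
      = psgn \<pi> *\<^sub>R T (map (map ?phi) gs)" if gs: "gs \<in> comp_index ?Q" for gs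
  proof -
    have v: "va ?Q gs" by (rule ci_va[OF gs])
    have sub: "\<And>\<rho>. \<rho> \<in> set gs \<Longrightarrow> set \<rho> \<subseteq> set ?Q" using v by (auto simp: va_def)
    have e1: "map (\<lambda>\<rho>. eta (map card \<rho>) (map ?a' \<rho>)) gs = map ev (map (map ?phi) gs)"
    proof -
      have "eta (map card \<rho>) (map ?a' \<rho>) = ev (map ?phi \<rho>)" if "\<rho> \<in> set gs" for \<rho>
      proof -
        have m1: "map ?a' \<rho> = map a (map ?phi \<rho>)" using a' sub[OF that] by auto
        have m2: "map card (map ?phi \<rho>) = map card \<rho>" by (rule t1.map_card_transport[OF sub[OF that]])
        show ?thesis by (simp only: ev_def m1 m2)
      qed
      thus ?thesis by simp
    qed
    have e2: "map (\<lambda>\<rho>. card (U \<rho>)) gs = map (\<lambda>\<rho>. card (U \<rho>)) (map (map ?phi) gs)"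
      using t1.cardU_transport[OF v] by simp
    have "mset (concat gs) = mset ?Q"
      by (rule set_eq_iff_mset_eq_distinct[THEN iffD1]) (use v gbl_distinct[OF gQ] in \<open>auto simp: va_def\<close>)
    hence "psgn (concat gs) * psgn (map ?phi (concat gs)) = psgn \<pi>"
      using t1.sign_transport psQ by simp
    hence "psgn (concat gs) = psgn \<pi> * psgn (map ?phi (concat gs))"
      using psgn_sq[of "map ?phi (concat gs)"] by (metis mult.assoc mult.right_neutral)
    hence e3: "psgn (concat gs) = psgn \<pi> * psgn (concat (map (map ?phi) gs))" by (simp add: map_concat)
    show ?thesis unfolding e1 e2 e3 T_def by simp
  qed
  have arrX: "arr (map (map ?phi) gs) \<and> srtd (map (map ?phi) gs)" if gs: "gs \<in> comp_index ?Q" for gs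
  proof -
    have v: "va ?Q gs" by (rule ci_va[OF gs])
    have vX: "va \<pi> (map (map ?phi) gs)" by (rule t1.va_transport[OF v])
    have "gbl (concat (map (map ?phi) gs))" by (rule va_gbl_concat[OF gpi vX])
    moreover have "\<forall>X\<in>set (concat (map (map ?phi) gs)). X \<subseteq> J"
      using vX pi IJ by (auto simp: va_def canon_partitions_def)
    moreover have "\<forall>h\<in>set (map (map ?phi) gs). h \<noteq> []" using vX by (simp add: va_def)
    ultimately have ar: "arr (map (map ?phi) gs)" by (simp add: arr_def)
    have sub: "\<And>\<rho>. \<rho> \<in> set gs \<Longrightarrow> set \<rho> \<subseteq> set ?Q" using v by (auto simp: va_def)
    have inner: "\<forall>h\<in>set (map (map ?phi) gs). sorted (map card h)"
    proof
      fix h assume "h \<in> set (map (map ?phi) gs)"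
      then obtain \<rho> where r: "\<rho> \<in> set gs" "h = map ?phi \<rho>" by auto
      have "\<rho> \<in> canon_partitions (U \<rho>)" using gs r by (simp add: comp_index_def)
      hence "sorted (map card \<rho>)" by (rule cp_sorted_card)
      moreover have "map card h = map card \<rho>" unfolding r(2) by (rule t1.map_card_transport[OF sub[OF r(1)]])
      ultimately show "sorted (map card h)" by simp
    qed
    have eqm: "map (\<lambda>h. card (U h)) (map (map ?phi) gs) = map card (map U gs)"
      unfolding map_map comp_def by (rule map_cong[OF refl]) (rule t1.cardU_transport[OF v])
    have "sorted (map (\<lambda>h. card (U h)) (map (map ?phi) gs))" unfolding eqm
      by (rule card_sorted_of_set_less) (use gs in \<open>simp add: comp_index_def\<close>)
    thus ?thesis using ar inner by (simp add: srtd_def)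
  qed
  have reidx: "(\<Sum>gs\<in>comp_index ?Q. T (map (map ?phi) gs)) = (\<Sum>hs\<in>comp_index \<pi>. T hs)"
  proof (rule sum.reindex_bij_witness[where i = "\<lambda>hs. norm (map (map ?psi) hs)" and j = "\<lambda>gs. norm (map (map ?phi) gs)"])
    fix gs assume gs: "gs \<in> comp_index ?Q"
    have v: "va ?Q gs" by (rule ci_va[OF gs])
    have vX: "va \<pi> (map (map ?phi) gs)" by (rule t1.va_transport[OF v])
    show "norm (map (map ?phi) gs) \<in> comp_index \<pi>" by (rule norm_ci[OF gpi vX])
    have vN: "va \<pi> (norm (map (map ?phi) gs))" by (rule ci_va[OF norm_ci[OF gpi vX]])
    have vY: "va ?Q (map (map ?psi) (norm (map (map ?phi) gs)))" by (rule t2.va_transport[OF vN])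
    have sub: "\<And>S. S \<in> set (map set gs) \<Longrightarrow> S \<subseteq> set ?Q" using v by (auto simp: va_def)
    have "set (map set (map (map ?psi) (norm (map (map ?phi) gs))))
        = (\<lambda>S. ?psi ` S) ` ((\<lambda>S. ?phi ` S) ` set (map set gs))"
      unfolding t2.ss_transport norm_set t1.ss_transport ..
    also have "\<dots> = set (map set gs)"
    proof -
      have "?psi ` (?phi ` S) = S" if "S \<in> set (map set gs)" for S
      proof -
        have "?psi ` (?phi ` S) = (\<lambda>x. x) ` S" unfolding image_image
          by (rule image_cong[OF refl]) (use sub[OF that] t1.psi_phi in auto)
        thus ?thesis by simp
      qed
      thus ?thesis by (simp add: image_image cong: image_cong)
    qed
    finally have ss: "set (map set (map (map ?psi) (norm (map (map ?phi) gs)))) = set (map set gs)" .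
    show "norm (map (map ?psi) (norm (map (map ?phi) gs))) = gs"
      using norm_eq[OF gQ vY v ss] norm_id[OF gs] by simp
    show "T (norm (map (map ?phi) gs)) = T (map (map ?phi) gs)"
      by (rule T_norm) (use arrX[OF gs] in auto)
  next
    fix hs assume hs: "hs \<in> comp_index \<pi>"
    have v: "va \<pi> hs" by (rule ci_va[OF hs])
    have vX: "va ?Q (map (map ?psi) hs)" by (rule t2.va_transport[OF v])
    show "norm (map (map ?psi) hs) \<in> comp_index ?Q" by (rule norm_ci[OF gQ vX])
    have vN: "va ?Q (norm (map (map ?psi) hs))" by (rule ci_va[OF norm_ci[OF gQ vX]])
    have vY: "va \<pi> (map (map ?phi) (norm (map (map ?psi) hs)))" by (rule t1.va_transport[OF vN])
    have sub: "\<And>S. S \<in> set (map set hs) \<Longrightarrow> S \<subseteq> set \<pi>" using v by (auto simp: va_def)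
    have "set (map set (map (map ?phi) (norm (map (map ?psi) hs))))
        = (\<lambda>S. ?phi ` S) ` ((\<lambda>S. ?psi ` S) ` set (map set hs))"
      unfolding t1.ss_transport norm_set t2.ss_transport ..
    also have "\<dots> = set (map set hs)"
    proof -
      have "?phi ` (?psi ` S) = S" if "S \<in> set (map set hs)" for S
      proof -
        have "?phi ` (?psi ` S) = (\<lambda>x. x) ` S" unfolding image_image
          by (rule image_cong[OF refl]) (use sub[OF that] t2.psi_phi in auto)
        thus ?thesis by simp
      qed
      thus ?thesis by (simp add: image_image cong: image_cong)
    qed
    finally have ss: "set (map set (map (map ?phi) (norm (map (map ?psi) hs)))) = set (map set hs)" .
    show "norm (map (map ?phi) (norm (map (map ?psi) hs))) = hs"
      using norm_eq[OF gpi vY v ss] norm_id[OF hs] by simp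
  qed
  have "comp_components tau eta ?p (map a \<pi>) = (\<Sum>gs\<in>comp_index ?Q. psgn \<pi> *\<^sub>R T (map (map ?phi) gs))"
    unfolding cc using trm by (rule sum.cong[OF refl])
  also have "\<dots> = psgn \<pi> *\<^sub>R (\<Sum>gs\<in>comp_index ?Q. T (map (map ?phi) gs))"
    by (simp add: scaleR_sum_right)
  finally show ?thesis unfolding reidx .
qed

end


lemma mset_w_union:
  assumes "\<forall>h\<in>set L. distinct (w h) \<and> (\<forall>X\<in>set h. finite X)"
  shows "mset (w (concat L)) = mset (w (map (\<lambda>h. \<Union>(set h)) L))"
  using assms
proof (induction L)
  case Nil then show ?case by simp
next
  case (Cons h L)
  have d: "distinct (w h)" "\<forall>X\<in>set h. finite X" using Cons.prems by auto
  have "mset (sorted_list_of_set (\<Union>(set h))) = mset (w h)"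
  proof -
    have "finite (\<Union>(set h))" using d by auto
    moreover have "set (w h) = \<Union>(set h)" using d by (simp add: set_w)
    ultimately show ?thesis using d by (simp add: set_eq_iff_mset_eq_distinct[symmetric])
  qed
  thus ?case using Cons by (simp add: w_concat)
qed

lemma cp_U: "\<sigma> \<in> canon_partitions K \<Longrightarrow> U \<sigma> = K"
  by (simp add: canon_partitions_def)

lemma listset_U: assumes "\<sigma>s \<in> listset (map canon_partitions \<rho>)" shows "map U \<sigma>s = \<rho>"
proof -
  have l: "length \<sigma>s = length \<rho>" and e: "\<forall>i<length \<sigma>s. \<sigma>s ! i \<in> canon_partitions (\<rho> ! i)"
    using assms by (auto simp: listset_iff)
  show ?thesis by (rule nth_equalityI) (use l e cp_U in auto)
qed

context setting begin

lemma induced_eta: "K \<noteq> {} \<Longrightarrow> K \<subseteq> J \<Longrightarrow> induced eta J a K = (\<Sum>\<sigma>\<in>canon_partitions K. psgn \<sigma> *\<^sub>R ev \<sigma>)"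
  by (simp add: induced_def ev_def)

lemma cp_arr: assumes "finite K" "K \<noteq> {}" "K \<subseteq> J" "\<sigma> \<in> canon_partitions K" shows "arr [\<sigma>]"
proof -
  have "gbl \<sigma>" by (rule cp_gbl[OF assms(1,4)])
  moreover have "\<sigma> \<noteq> []" using assms(2,4) cp_U by fastforce
  moreover have "\<forall>X\<in>set \<sigma>. X \<subseteq> J" using assms(3,4) by (auto simp: canon_partitions_def)
  ultimately show ?thesis by (simp add: arr_def)
qed

lemma ev_cp: assumes "finite K" "K \<noteq> {}" "K \<subseteq> J" "\<sigma> \<in> canon_partitions K"
  shows "ev \<sigma> \<in> B (card K) (eta0 m)"
  using eta_valid(3)[OF cp_arr[OF assms] _ cp_sorted_card[OF assms(4)]] cp_U[OF assms(4)] by simp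

lemma lhs_term:
  assumes fI: "finite I" and IJ: "I \<subseteq> J" and rho: "\<rho> \<in> canon_partitions I" and ne: "I \<noteq> {}"
  shows "psgn \<rho> *\<^sub>R tau (map card \<rho>) (map (induced eta J a) \<rho>) = (\<Sum>\<sigma>s\<in>listset (map canon_partitions \<rho>). T \<sigma>s)"
proof -
  let ?p = "map card \<rho>"
  have g: "gbl \<rho>" by (rule cp_gbl[OF fI rho])
  have blk: "\<And>K. K \<in> set \<rho> \<Longrightarrow> K \<noteq> {} \<and> finite K \<and> K \<subseteq> J"
    using g rho IJ by (auto simp: gbl_def canon_partitions_def)
  have Ur: "U \<rho> = I" using rho by (simp add: canon_partitions_def)
  have rne: "\<rho> \<noteq> []" using Ur ne by auto
  have vt: "valid_tuple n ?p"
  proof -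
    have "sum_list ?p = card I" using gbl_card_sum[OF g] Ur by simp
    also have "\<dots> \<le> n" using card_mono[OF fJ IJ] cardJ by simp
    finally have "sum_list ?p \<le> n" .
    moreover have "\<forall>i\<in>set ?p. 1 \<le> i" using blk by (auto simp: Suc_le_eq card_gt_0_iff)
    ultimately show ?thesis using rne cp_sorted_card[OF rho] by (simp add: valid_tuple_def)
  qed
  let ?g = "\<lambda>\<sigma>. psgn \<sigma> *\<^sub>R ev \<sigma>"
  have sub: "\<And>i. i < length \<rho> \<Longrightarrow> subspace (B (card (\<rho> ! i)) (eta0 m))"
    using sub[OF SMt vB vt] by simp
  have ind: "map (induced eta J a) \<rho> = map (\<lambda>S. \<Sum>x\<in>S. ?g x) (map canon_partitions \<rho>)"
    using blk induced_eta by simp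
  have "tau ?p ([] @ map (\<lambda>S. \<Sum>x\<in>S. ?g x) (map canon_partitions \<rho>))
      = (\<Sum>xs\<in>listset (map canon_partitions \<rho>). tau ?p ([] @ map ?g xs))"
  proof (rule t_expand[OF SMt vB vt])
    show "\<forall>i<length (map canon_partitions \<rho>). finite (map canon_partitions \<rho> ! i) \<and>
        (\<forall>x\<in>map canon_partitions \<rho> ! i. ?g x \<in> B (?p ! (length [] + i)) (eta0 m))"
    proof (intro allI impI conjI ballI)
      fix i assume i: "i < length (map canon_partitions \<rho>)"
      hence K: "\<rho> ! i \<noteq> {}" "finite (\<rho> ! i)" "\<rho> ! i \<subseteq> J" using blk by auto
      show "finite (map canon_partitions \<rho> ! i)" using i K cp_finite by simp
      fix x assume "x \<in> map canon_partitions \<rho> ! i"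
      hence x: "x \<in> canon_partitions (\<rho> ! i)" using i by simp
      have "ev x \<in> B (card (\<rho> ! i)) (eta0 m)" by (rule ev_cp[OF K(2,1,3) x])
      hence "?g x \<in> B (card (\<rho> ! i)) (eta0 m)" using sub i real_vector.subspace_scale by auto
      thus "?g x \<in> B (?p ! (length [] + i)) (eta0 m)" using i by simp
    qed
  qed auto
  hence ex: "tau ?p (map (induced eta J a) \<rho>) = (\<Sum>xs\<in>listset (map canon_partitions \<rho>). tau ?p (map ?g xs))"
    by (simp only: ind append_Nil)
  have each: "psgn \<rho> *\<^sub>R tau ?p (map ?g xs) = T xs" if xs: "xs \<in> listset (map canon_partitions \<rho>)" for xs
  proof -
    have l: "length xs = length \<rho>" and e: "\<forall>i<length xs. xs ! i \<in> canon_partitions (\<rho> ! i)"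
      using xs by (auto simp: listset_iff)
    have mU: "map U xs = \<rho>" by (rule listset_U[OF xs])
    have "tau ?p ([] @ map ?g xs) = prod_list (map psgn xs) *\<^sub>R tau ?p ([] @ map ev xs)"
    proof (rule t_scalars[OF SMt vB vt])
      show "\<forall>i<length xs. ev (xs ! i) \<in> B (?p ! (length [] + i)) (eta0 m)"
      proof (intro allI impI)
        fix i assume i: "i < length xs"
        hence K: "\<rho> ! i \<noteq> {}" "finite (\<rho> ! i)" "\<rho> ! i \<subseteq> J" using blk l by auto
        have "ev (xs ! i) \<in> B (card (\<rho> ! i)) (eta0 m)" by (rule ev_cp[OF K(2,1,3)]) (use e i in auto)
        thus "ev (xs ! i) \<in> B (?p ! (length [] + i)) (eta0 m)" using i l by simp
      qed
    qed (use l in auto)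
    hence t1: "tau ?p (map ?g xs) = prod_list (map psgn xs) *\<^sub>R tau ?p (map ev xs)" by simp
    have dw: "\<forall>h\<in>set xs. distinct (w h) \<and> (\<forall>X\<in>set h. finite X)"
    proof
      fix h assume "h \<in> set xs"
      then obtain i where i: "i < length xs" "h = xs ! i" by (metis in_set_conv_nth)
      have "h \<in> canon_partitions (\<rho> ! i)" using e i by simp
      moreover have "finite (\<rho> ! i)" using blk i l by auto
      ultimately have "gbl h" by (rule cp_gbl[rotated])
      thus "distinct (w h) \<and> (\<forall>X\<in>set h. finite X)" by (simp add: gbl_def)
    qed
    have mw: "mset (w (concat xs)) = mset (w \<rho>)" using mset_w_union[OF dw] mU by simp
    have dc: "distinct (w (concat xs))" using mw g mset_eq_imp_distinct_iff by (metis gbl_def)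
    have ps: "psgn (concat xs) = psgn \<rho> * prod_list (map psgn xs)"
      using psgn_concat[of xs] dw dc mU g by (simp add: gbl_def)
    have pp: "?p = map (\<lambda>h. card (U h)) xs" using mU by auto
    show ?thesis using t1 unfolding T_def ps pp by simp
  qed
  show ?thesis unfolding ex scaleR_sum_right using each by (rule sum.cong[OF refl])
qed

lemma rhs_term:
  assumes fI: "finite I" and IJ: "I \<subseteq> J" and pi: "\<pi> \<in> canon_partitions I"
  shows "psgn \<pi> *\<^sub>R comp_components tau eta (map card \<pi>) (map a \<pi>) = (\<Sum>hs\<in>comp_index \<pi>. T hs)"
  unfolding relabel[OF assms] using psgn_sq[of \<pi>] by simp

lemma union_eq:
  assumes fI: "finite I" and IJ: "I \<subseteq> J" and ne: "I \<noteq> {}"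
  shows "(\<Union>\<pi>\<in>canon_partitions I. comp_index \<pi>) = (\<Union>\<rho>\<in>canon_partitions I. listset (map canon_partitions \<rho>))"
proof
  show "(\<Union>\<pi>\<in>canon_partitions I. comp_index \<pi>) \<subseteq> (\<Union>\<rho>\<in>canon_partitions I. listset (map canon_partitions \<rho>))"
  proof (clarify)
    fix \<pi> hs assume pi: "\<pi> \<in> canon_partitions I" and hs: "hs \<in> comp_index \<pi>"
    have gpi: "gbl \<pi>" by (rule cp_gbl[OF fI pi])
    have v: "va \<pi> hs" by (rule ci_va[OF hs])
    have gc: "gbl (concat hs)" by (rule va_gbl_concat[OF gpi v])
    have gU: "gbl (map U hs)" by (rule va_gbl_U[OF gpi v])
    have "U (map U hs) = I"
    proof -
      have "U (map U hs) = U (concat hs)" by auto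
      also have "\<dots> = U \<pi>" using v by (simp add: va_def)
      also have "\<dots> = I" using pi by (simp add: canon_partitions_def)
      finally show ?thesis .
    qed
    moreover have "sorted_wrt set_less (map U hs)" using hs by (simp add: comp_index_def)
    ultimately have "map U hs \<in> canon_partitions I"
      using gU fI by (simp add: cp_alt gbl_def)
    moreover have "hs \<in> listset (map canon_partitions (map U hs))"
      using hs by (auto simp: listset_iff comp_index_def)
    ultimately show "hs \<in> (\<Union>\<rho>\<in>canon_partitions I. listset (map canon_partitions \<rho>))" by blast
  qed
next
  show "(\<Union>\<rho>\<in>canon_partitions I. listset (map canon_partitions \<rho>)) \<subseteq> (\<Union>\<pi>\<in>canon_partitions I. comp_index \<pi>)"
  proof (clarify)
    fix \<rho> xs assume rho: "\<rho> \<in> canon_partitions I" and xs: "xs \<in> listset (map canon_partitions \<rho>)"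
    have g: "gbl \<rho>" by (rule cp_gbl[OF fI rho])
    have l: "length xs = length \<rho>" and e: "\<forall>i<length xs. xs ! i \<in> canon_partitions (\<rho> ! i)"
      using xs by (auto simp: listset_iff)
    have mU: "map U xs = \<rho>" by (rule listset_U[OF xs])
    have blk: "\<And>K. K \<in> set \<rho> \<Longrightarrow> K \<noteq> {} \<and> finite K"
      using g by (auto simp: gbl_def)
    have gx: "\<forall>h\<in>set xs. gbl h \<and> h \<noteq> []"
    proof
      fix h assume "h \<in> set xs"
      then obtain i where i: "i < length xs" "h = xs ! i" by (metis in_set_conv_nth)
      have hc: "h \<in> canon_partitions (\<rho> ! i)" using e i by simp
      have K: "\<rho> ! i \<noteq> {}" "finite (\<rho> ! i)" using blk i l by auto
      have "gbl h" by (rule cp_gbl[OF K(2) hc])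
      moreover have "h \<noteq> []" using cp_U[OF hc] K by auto
      ultimately show "gbl h \<and> h \<noteq> []" by simp
    qed
    have mw: "mset (w (concat xs)) = mset (w \<rho>)" using mset_w_union[of xs] gx mU by (simp add: gbl_def)
    have dc: "distinct (w (concat xs))" using mw g mset_eq_imp_distinct_iff by (metis gbl_def)
    have fb: "\<forall>X\<in>set (concat xs). X \<noteq> {} \<and> finite X" using gx by (auto simp: gbl_def)
    have gcx: "gbl (concat xs)" using dc fb by (simp add: gbl_def)
    let ?\<pi> = "sort_key skey (concat xs)"
    have spi: "set ?\<pi> = set (concat xs)" by simp
    have gpi: "gbl ?\<pi>" by (rule gbl_perm[OF gcx]) simp
    have Uc: "U (concat xs) = I"
    proof -
      have "U (concat xs) = U (map U xs)" by auto
      thus ?thesis using mU rho by (simp add: canon_partitions_def)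
    qed
    have srt: "sorted_wrt set_less ?\<pi>"
      by (rule sort_skey_strict) (use fb gbl_distinct[OF gcx] in auto)
    have pic: "?\<pi> \<in> canon_partitions I"
      using gpi Uc srt fI by (simp add: cp_alt gbl_def)
    have "xs \<in> comp_index ?\<pi>"
      unfolding comp_index_def
    proof (intro CollectI conjI ballI)
      show "xs \<noteq> []" using l ne rho by (auto simp: canon_partitions_def)
      fix h assume h: "h \<in> set xs"
      then obtain i where i: "i < length xs" "h = xs ! i" by (metis in_set_conv_nth)
      have hc: "h \<in> canon_partitions (\<rho> ! i)" using e i by simp
      show "h \<noteq> []" using gx h by simp
      show "h \<in> canon_partitions (U h)" using hc cp_U[OF hc] by simp
    next
      show "distinct (concat xs)" by (rule gbl_distinct[OF gcx])
      show "set (concat xs) = set ?\<pi>" by simp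
      show "sorted_wrt set_less (map U xs)" using mU rho by (simp add: canon_partitions_def)
    qed
    thus "xs \<in> (\<Union>\<pi>\<in>canon_partitions I. comp_index \<pi>)" using pic by blast
  qed
qed

lemma main_I:
  assumes fI: "finite I" and IJ: "I \<subseteq> J" and ne: "I \<noteq> {}"
  shows "(\<Sum>\<rho>\<in>canon_partitions I. psgn \<rho> *\<^sub>R tau (map card \<rho>) (map (induced eta J a) \<rho>))
       = (\<Sum>\<pi>\<in>canon_partitions I. psgn \<pi> *\<^sub>R comp_components tau eta (map card \<pi>) (map a \<pi>))"
proof -
  have fcp: "finite (canon_partitions I)" by (rule cp_finite[OF fI])
  have "(\<Sum>\<rho>\<in>canon_partitions I. psgn \<rho> *\<^sub>R tau (map card \<rho>) (map (induced eta J a) \<rho>))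
      = (\<Sum>\<rho>\<in>canon_partitions I. \<Sum>\<sigma>s\<in>listset (map canon_partitions \<rho>). T \<sigma>s)"
    by (rule sum.cong[OF refl]) (rule lhs_term[OF fI IJ _ ne])
  also have "\<dots> = sum T (\<Union>\<rho>\<in>canon_partitions I. listset (map canon_partitions \<rho>))"
  proof (rule sum.UNION_disjoint[symmetric, OF fcp])
    show "\<forall>\<rho>\<in>canon_partitions I. finite (listset (map canon_partitions \<rho>))"
    proof
      fix \<rho> assume rho: "\<rho> \<in> canon_partitions I"
      have "\<forall>K\<in>set \<rho>. finite K" using cp_gbl[OF fI rho] by (simp add: gbl_def)
      thus "finite (listset (map canon_partitions \<rho>))" by (intro listset_finite) (auto intro: cp_finite)
    qed
    show "\<forall>\<rho>\<in>canon_partitions I. \<forall>\<rho>'\<in>canon_partitions I. \<rho> \<noteq> \<rho>' \<longrightarrow>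
        listset (map canon_partitions \<rho>) \<inter> listset (map canon_partitions \<rho>') = {}"
      using listset_U by blast
  qed
  also have "\<dots> = sum T (\<Union>\<pi>\<in>canon_partitions I. comp_index \<pi>)" unfolding union_eq[OF assms] ..
  also have "\<dots> = (\<Sum>\<pi>\<in>canon_partitions I. \<Sum>hs\<in>comp_index \<pi>. T hs)"
  proof (rule sum.UNION_disjoint[OF fcp])
    show "\<forall>\<pi>\<in>canon_partitions I. finite (comp_index \<pi>)" by (auto intro: ci_finite)
    show "\<forall>\<pi>\<in>canon_partitions I. \<forall>\<pi>'\<in>canon_partitions I. \<pi> \<noteq> \<pi>' \<longrightarrow> comp_index \<pi> \<inter> comp_index \<pi>' = {}"
    proof (intro ballI impI)
      fix \<pi> \<pi>' assume p: "\<pi> \<in> canon_partitions I" "\<pi>' \<in> canon_partitions I" "\<pi> \<noteq> \<pi>'"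
      show "comp_index \<pi> \<inter> comp_index \<pi>' = {}"
      proof (rule ccontr)
        assume "comp_index \<pi> \<inter> comp_index \<pi>' \<noteq> {}"
        then obtain hs where "hs \<in> comp_index \<pi>" "hs \<in> comp_index \<pi>'" by blast
        hence "set \<pi> = set \<pi>'" by (simp add: comp_index_def)
        moreover have "sorted_wrt set_less \<pi>" "sorted_wrt set_less \<pi>'" using p by (auto simp: canon_partitions_def)
        ultimately have "\<pi> = \<pi>'" using set_less_unique by blast
        thus False using p by simp
      qed
    qed
  qed
  also have "\<dots> = (\<Sum>\<pi>\<in>canon_partitions I. psgn \<pi> *\<^sub>R comp_components tau eta (map card \<pi>) (map a \<pi>))"
    by (rule sum.cong[OF refl]) (rule rhs_term[OF fI IJ, symmetric])
  finally show ?thesis .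
qed

end


theorem mainTheorem8:
  fixes n :: nat
    and A :: "nat \<Rightarrow> 'm \<Rightarrow> 'a::real_vector set"
    and B :: "nat \<Rightarrow> 'n \<Rightarrow> 'b::real_vector set"
    and C :: "nat \<Rightarrow> 'p \<Rightarrow> 'c::real_vector set"
    and eta0 :: "'m \<Rightarrow> 'n" and tau0 :: "'n \<Rightarrow> 'p"
    and eta :: "nat list \<Rightarrow> 'a list \<Rightarrow> 'b"
    and tau :: "nat list \<Rightarrow> 'b list \<Rightarrow> 'c"
  assumes "vb_family n A" and "vb_family n B" and "vb_family n C"
    and "sym_morphism n A B eta0 eta"
    and "sym_morphism n B C tau0 tau"
  shows "\<forall>J m a. J \<subseteq> {1..n} \<and> in_E A J m a \<longrightarrow>
           induced tau J (induced eta J a) = induced (comp_components tau eta) J a"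
proof (intro allI impI)
  fix J m a assume h: "J \<subseteq> {1..n} \<and> in_E A J m a"
  interpret S: setting n A B C eta0 tau0 eta tau J m a
    by unfold_locales (use assms h in auto)
  show "induced tau J (induced eta J a) = induced (comp_components tau eta) J a"
  proof (rule ext)
    fix I
    show "induced tau J (induced eta J a) I = induced (comp_components tau eta) J a I"
    proof (cases "I \<noteq> {} \<and> I \<subseteq> J")
      case True
      have fI: "finite I" using True S.fJ finite_subset by blast
      have "(\<Sum>\<rho>\<in>canon_partitions I. psgn \<rho> *\<^sub>R tau (map card \<rho>) (map (induced eta J a) \<rho>))
       = (\<Sum>\<pi>\<in>canon_partitions I. psgn \<pi> *\<^sub>R comp_components tau eta (map card \<pi>) (map a \<pi>))"
        using S.main_I[OF fI] True by blast
      thus ?thesis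
        unfolding induced_def[of tau J "induced eta J a" I] induced_def[of "comp_components tau eta" J a I]
          if_P[OF True] .
    next
      case False
      show ?thesis
        unfolding induced_def[of tau J "induced eta J a" I] induced_def[of "comp_components tau eta" J a I]
          if_not_P[OF False] ..
    qed
  qed
qed

end
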